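(* Let $\mathcal{R}$ be a commutative, associative real algebra with unit, $l\ge1$, and $m_1,\ldots,m_l$ positive integers. Let $A_1,\ldots,A_l\in M^{\infty\times\infty}_0(\mathcal{R}[e^{t_1},\ldots,e^{t_{l+1}}])$ satisfy: a) $A_iA_j=A_jA_i$ for all $i,j$; b) $\partial_iA_j=\partial_jA_i$ for $1\le i,j\le l$ (with $\partial_i$ applied entrywise); c) for each $i$, $A_i=A_i'+A_i''$, where $A_i'$ is strictly lower triangular and each of its entries is a linear combination of monomials $e^{td}$, $d=(d_1,\ldots,d_{l+1})\ge0$, with $d_i-m_id_{l+1}\ne0$, and $A_i''$ is strictly upper triangular with entries in $\mathcal{R}$ (independent of $t$). Consider the system $( * )$: $\partial_ig=A_ig$, $1\le i\le l$, for $g=\sum_{d\ge0}g_d(t_1,\ldots,t_l)e^{td}\in\mathcal{R}^\infty_0[t_1,\ldots,t_l][[e^{t_1},\ldots,e^{t_{l+1}}]]$. Then the solutions of $( * )$ are uniquely determined by the constant terms $g_d^0\in\mathcal{R}^\infty_0$ of those $g_d$ with $d_1=m_1d_{l+1},\ldots,d_l=m_ld_{l+1}$. More precisely, solutions satisfy recurrence relations $$g_d=\begin{cases}G_d(g_d^0,\ g_{d'}\mid d'<d)&\text{if } d_i=m_id_{l+1}\text{ for all }1\le i\le l,\\ G_d(g_{d'}\mid d'<d)&\text{otherwise,}\end{cases}$$ where $d'<d$ means $d'\le d$ componentwise and $d'\ne d$, and each $G_d$ is $\mathcal{R}$-linear in coefficients: every coefficient of the polynomial $g_d$ is of the form $C_0g_d^0+\sum_jC_jv_j$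 (first case) or $\sum_jC_jv_j$ (second case), with $C_j\in M^{\infty\times\infty}_0(\mathcal{R})$ and $v_j\in\mathcal{R}^\infty_0$ coefficients of polynomials $g_{d'}$ with $d'<d$.
   Context: $\mathcal{R}^\infty_0$ denotes sequences (indexed by positive integers) in $\mathcal{R}$ with finite support; for a ring $\mathcal{S}$, $M^{\infty\times\infty}_0(\mathcal{S})$ denotes infinite matrices indexed by positive integers each of whose columns has finitely many nonzero entries (acting on finitely supported sequences). $e^{td}=e^{t_1d_1}\cdots e^{t_{l+1}d_{l+1}}$, and the $e^{t_j}$ are treated as formal multiplicative variables. The operator $\partial_i$ ($1\le i\le l$) is $\mathcal{R}$-linear and defined by $\partial_i(ge^{td})=\frac{\partial g}{\partial t_i}e^{td}+(d_i-m_id_{l+1})ge^{td}$ for $g$ polynomial in $t_1,\ldots,t_l$. *)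

theory Defs
  imports Complex_Main
begin

text \<open>Multi-indices are functions nat => nat (pointwise order and subtraction).
  Exponents d of e^{t_1},...,e^{t_{N}} are supported on {1..N}.\<close>

definition mindex :: "nat \<Rightarrow> (nat \<Rightarrow> nat) set" where
  "mindex N = {d. \<forall>i. i \<notin> {1..N} \<longrightarrow> d i = 0}"

text \<open>Polynomials in R[e^{t_1},...,e^{t_{l+1}}]: finitely supported coefficient functions.\<close>
definition epoly :: "nat \<Rightarrow> ((nat \<Rightarrow> nat) \<Rightarrow> 'r::zero) set" where
  "epoly l = {p. finite {d. p d \<noteq> 0} \<and> (\<forall>d. p d \<noteq> 0 \<longrightarrow> d \<in> mindex (Suc l))}"

text \<open>Matrices in M_0(R[e^t]) (row n, column j, coefficient of e^{td}); each column has
  finitely many nonzero entries.  Indices start at 0 instead of 1.\<close>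
definition emat :: "nat \<Rightarrow> (nat \<Rightarrow> nat \<Rightarrow> (nat \<Rightarrow> nat) \<Rightarrow> 'r::zero) \<Rightarrow> bool" where
  "emat l A \<longleftrightarrow> (\<forall>n j. A n j \<in> epoly l) \<and> (\<forall>j. finite {n. A n j \<noteq> (\<lambda>d. 0)})"

definition rmat :: "(nat \<Rightarrow> nat \<Rightarrow> 'r::zero) \<Rightarrow> bool" where
  "rmat C \<longleftrightarrow> (\<forall>j. finite {n. C n j \<noteq> 0})"

definition mulv :: "(nat \<Rightarrow> nat \<Rightarrow> 'r::comm_ring_1) \<Rightarrow> (nat \<Rightarrow> 'r) \<Rightarrow> nat \<Rightarrow> 'r" where
  "mulv C v n = (\<Sum>j\<in>{j. v j \<noteq> 0}. C n j * v j)"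

definition emul :: "(nat \<Rightarrow> nat \<Rightarrow> (nat \<Rightarrow> nat) \<Rightarrow> 'r::comm_ring_1)
    \<Rightarrow> (nat \<Rightarrow> nat \<Rightarrow> (nat \<Rightarrow> nat) \<Rightarrow> 'r) \<Rightarrow> nat \<Rightarrow> nat \<Rightarrow> (nat \<Rightarrow> nat) \<Rightarrow> 'r" where
  "emul A B n p d = (\<Sum>q\<in>{q. B q p \<noteq> (\<lambda>d. 0)}. \<Sum>d'\<in>{d'. d' \<le> d}. A n q d' * B q p (d - d'))"

text \<open>Elements g of R^infty_0[t_1..t_l][[e^{t_1},...,e^{t_{l+1}}]]:
  g d k n = n-th component of the coefficient of t^k e^{td}.\<close>
definition gspace :: "nat \<Rightarrow> ((nat \<Rightarrow> nat) \<Rightarrow> (nat \<Rightarrow> nat) \<Rightarrow> nat \<Rightarrow> 'r::zero) \<Rightarrow> bool" where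
  "gspace l g \<longleftrightarrow> (\<forall>d. d \<notin> mindex (Suc l) \<longrightarrow> g d = (\<lambda>k n. 0)) \<and>
     (\<forall>d. finite {(k, n). g d k n \<noteq> 0} \<and> (\<forall>k n. g d k n \<noteq> 0 \<longrightarrow> k \<in> mindex l))"

definition pder :: "nat \<Rightarrow> (nat \<Rightarrow> nat) \<Rightarrow> nat \<Rightarrow> ((nat \<Rightarrow> nat) \<Rightarrow> (nat \<Rightarrow> nat) \<Rightarrow> nat \<Rightarrow> 'r::comm_ring_1)
    \<Rightarrow> (nat \<Rightarrow> nat) \<Rightarrow> (nat \<Rightarrow> nat) \<Rightarrow> nat \<Rightarrow> 'r" where
  "pder l m i g d k n = of_nat (k i + 1) * g d (k(i := k i + 1)) n
     + of_int (int (d i) - int (m i) * int (d (Suc l))) * g d k n"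

definition epder :: "nat \<Rightarrow> (nat \<Rightarrow> nat) \<Rightarrow> nat \<Rightarrow> ((nat \<Rightarrow> nat) \<Rightarrow> 'r::comm_ring_1) \<Rightarrow> (nat \<Rightarrow> nat) \<Rightarrow> 'r" where
  "epder l m i a d = of_int (int (d i) - int (m i) * int (d (Suc l))) * a d"

definition amul :: "(nat \<Rightarrow> nat \<Rightarrow> (nat \<Rightarrow> nat) \<Rightarrow> 'r::comm_ring_1)
    \<Rightarrow> ((nat \<Rightarrow> nat) \<Rightarrow> (nat \<Rightarrow> nat) \<Rightarrow> nat \<Rightarrow> 'r) \<Rightarrow> (nat \<Rightarrow> nat) \<Rightarrow> (nat \<Rightarrow> nat) \<Rightarrow> nat \<Rightarrow> 'r" where
  "amul A g d k n = (\<Sum>d'\<in>{d'. d' \<le> d}. \<Sum>j\<in>{j. g (d - d') k j \<noteq> 0}. A n j d' * g (d - d') k j)"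

definition resonant :: "nat \<Rightarrow> (nat \<Rightarrow> nat) \<Rightarrow> (nat \<Rightarrow> nat) \<Rightarrow> bool" where
  "resonant l m d \<longleftrightarrow> (\<forall>i\<in>{1..l}. d i = m i * d (Suc l))"

definition is_solution :: "nat \<Rightarrow> (nat \<Rightarrow> nat) \<Rightarrow> (nat \<Rightarrow> nat \<Rightarrow> nat \<Rightarrow> (nat \<Rightarrow> nat) \<Rightarrow> 'r::comm_ring_1)
    \<Rightarrow> ((nat \<Rightarrow> nat) \<Rightarrow> (nat \<Rightarrow> nat) \<Rightarrow> nat \<Rightarrow> 'r) \<Rightarrow> bool" where
  "is_solution l m A g \<longleftrightarrow> gspace l g \<and>
     (\<forall>i\<in>{1..l}. \<forall>d\<in>mindex (Suc l). pder l m i g d = amul (A i) g d)"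

end

theory Submission
  imports Defs
begin

definition fin :: "(nat \<Rightarrow> 'r::zero) \<Rightarrow> bool" where
  "fin v \<longleftrightarrow> finite {n. v n \<noteq> 0}"

definition bnd :: "nat \<Rightarrow> (nat \<Rightarrow> 'r::zero) \<Rightarrow> bool" where
  "bnd P v \<longleftrightarrow> (\<forall>n\<ge>P. v n = 0)"

definition upper :: "(nat \<Rightarrow> nat \<Rightarrow> 'r::zero) \<Rightarrow> bool" where
  "upper N \<longleftrightarrow> (\<forall>n p. N n p \<noteq> 0 \<longrightarrow> n < p)"

lemma fin_bnd: "fin v \<Longrightarrow> \<exists>P. bnd P v"
proof -
  assume "fin v"
  then have "finite {n. v n \<noteq> 0}" by (simp add: fin_def)
  then obtain P where "\<forall>n\<in>{n. v n \<noteq> 0}. n < P"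
    using finite_nat_set_iff_bounded by blast
  then have "\<forall>n\<ge>P. v n = 0" using leD by blast
  then show ?thesis unfolding bnd_def by blast
qed

lemma bnd_fin: "bnd P v \<Longrightarrow> fin v"
  unfolding bnd_def fin_def
  by (rule finite_subset[of _ "{..<P}"]) (auto simp: not_less[symmetric])

lemma fin_zero[simp]: "fin (\<lambda>n. 0)" by (simp add: fin_def)

lemma fin_lin: "fin v \<Longrightarrow> fin w \<Longrightarrow> fin (\<lambda>n. (a::'r::comm_ring_1) * v n + w n)"
  unfolding fin_def
  by (rule finite_subset[of _ "{n. v n \<noteq> 0} \<union> {n. w n \<noteq> 0}"]) auto

lemma mulv_superset:
  assumes "finite T" "{j. v j \<noteq> 0} \<subseteq> T"
  shows "mulv C v n = (\<Sum>j\<in>T. C n j * v j)"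
  unfolding mulv_def
  by (rule sum.mono_neutral_left) (use assms in auto)

lemma mulv_lin:
  assumes "fin v" "fin w"
  shows "mulv C (\<lambda>n. a * v n + w n) n = a * mulv C v n + mulv C w n"
proof -
  let ?T = "{n. v n \<noteq> 0} \<union> {n. w n \<noteq> 0}"
  have fT: "finite ?T" using assms by (simp add: fin_def)
  have "mulv C (\<lambda>n. a * v n + w n) n = (\<Sum>j\<in>?T. C n j * (a * v j + w j))"
    by (rule mulv_superset[OF fT]) auto
  also have "\<dots> = a * (\<Sum>j\<in>?T. C n j * v j) + (\<Sum>j\<in>?T. C n j * w j)"
    by (simp add: sum.distrib sum_distrib_left algebra_simps)
  also have "\<dots> = a * mulv C v n + mulv C w n"
    using mulv_superset[OF fT, of v C n] mulv_superset[OF fT, of w C n] by auto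
  finally show ?thesis .
qed

lemma mulv_zero[simp]: "mulv C (\<lambda>n. 0) = (\<lambda>n. 0)"
  by (simp add: mulv_def fun_eq_iff)

lemma mulv_fin:
  assumes "rmat C" "fin v" shows "fin (mulv C v)"
proof -
  have "{n. mulv C v n \<noteq> 0} \<subseteq> (\<Union>j\<in>{j. v j \<noteq> 0}. {n. C n j \<noteq> 0})"
  proof
    fix n assume "n \<in> {n. mulv C v n \<noteq> 0}"
    then have "(\<Sum>j\<in>{j. v j \<noteq> 0}. C n j * v j) \<noteq> 0" by (simp add: mulv_def)
    then obtain j where "j \<in> {j. v j \<noteq> 0}" "C n j * v j \<noteq> 0" by (meson sum.neutral)
    then show "n \<in> (\<Union>j\<in>{j. v j \<noteq> 0}. {n. C n j \<noteq> 0})" by auto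
  qed
  moreover have "finite (\<Union>j\<in>{j. v j \<noteq> 0}. {n. C n j \<noteq> 0})"
    using assms by (auto simp: fin_def rmat_def)
  ultimately show ?thesis unfolding fin_def by (rule finite_subset)
qed

lemma mulv_upper_bnd:
  assumes "upper N" "bnd P v" shows "bnd (P - 1) (mulv N v)"
  unfolding bnd_def
proof (intro allI impI)
  fix n assume n: "P - 1 \<le> n"
  have "fin v" using assms(2) by (rule bnd_fin)
  have "(\<Sum>j\<in>{j. v j \<noteq> 0}. N n j * v j) = 0"
  proof (rule sum.neutral, rule ballI)
    fix j assume "j \<in> {j. v j \<noteq> 0}"
    then have "j < P" using assms(2) unfolding bnd_def by (meson not_le mem_Collect_eq)
    then have "\<not> n < j" using n by linarith
    then have "N n j = 0" using assms(1) unfolding upper_def by blast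
    then show "N n j * v j = 0" by simp
  qed
  then show "mulv N v n = 0" by (simp add: mulv_def)
qed

lemma bnd0: "bnd 0 v \<Longrightarrow> v = (\<lambda>n. 0)"
  by (auto simp: bnd_def)

lemma ofint_cancel:
  fixes x :: "'r::{real_algebra_1, comm_ring_1}"
  assumes "c \<noteq> 0" "of_int c * x = 0" shows "x = 0"
proof -
  have "of_real (1 / real_of_int c) * (of_real (real_of_int c) * x) = (of_real (1 / real_of_int c) * of_real (real_of_int c)) * x"
    by (rule mult.assoc[symmetric])
  also have "\<dots> = of_real (1 / real_of_int c * real_of_int c) * x"
    by (simp only: of_real_mult)
  also have "\<dots> = x" using assms(1) by simp
  finally have "of_real (1 / real_of_int c) * (of_int c * x) = x" by simp
  then show ?thesis using assms(2) by simp
qed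

lemma ofint_div:
  fixes x :: "'r::{real_algebra_1, comm_ring_1}"
  assumes "c \<noteq> 0" shows "of_int c * (of_real (1 / real_of_int c) * x) = x"
proof -
  have "of_real (real_of_int c) * (of_real (1 / real_of_int c) * x) = (of_real (real_of_int c) * of_real (1 / real_of_int c)) * x"
    by (rule mult.assoc[symmetric])
  also have "\<dots> = of_real (real_of_int c * (1 / real_of_int c)) * x"
    by (simp only: of_real_mult)
  also have "\<dots> = x" using assms(1) by simp
  finally show ?thesis by simp
qed

lemma ofnat_cancel:
  fixes x :: "'r::{real_algebra_1, comm_ring_1}"
  assumes "c \<noteq> 0" "of_nat c * x = 0" shows "x = 0"
  using ofint_cancel[of "int c" x] assms by simp

lemma ofnat_div:
  fixes x :: "'r::{real_algebra_1, comm_ring_1}"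
  assumes "c \<noteq> 0" shows "of_nat c * (of_real (1 / real c) * x) = x"
  using ofint_div[of "int c" x] assms by simp

lemma cN_inj:
  fixes v :: "nat \<Rightarrow> 'r::{real_algebra_1, comm_ring_1}"
  assumes "c \<noteq> 0" "upper N" "fin v" "\<forall>n. of_int c * v n = mulv N v n"
  shows "v = (\<lambda>n. 0)"
proof (rule ccontr)
  assume "v \<noteq> (\<lambda>n. 0)"
  then have ne: "{n. v n \<noteq> 0} \<noteq> {}" by auto
  have f: "finite {n. v n \<noteq> 0}" using assms(3) by (simp add: fin_def)
  define p where "p = Max {n. v n \<noteq> 0}"
  have p: "v p \<noteq> 0" using Max_in[OF f ne] p_def by auto
  have "mulv N v p = 0"
    unfolding mulv_def
  proof (rule sum.neutral, rule ballI)
    fix j assume j: "j \<in> {j. v j \<noteq> 0}"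
    then have "j \<le> p" using Max_ge[OF f j] p_def by simp
    then have "N p j = 0" using assms(2) unfolding upper_def by (meson leD)
    then show "N p j * v j = 0" by simp
  qed
  then have "of_int c * v p = 0" using assms(4) by simp
  then show False using ofint_cancel[OF assms(1)] p by blast
qed

lemma cN_surj:
  fixes v :: "nat \<Rightarrow> 'r::{real_algebra_1, comm_ring_1}"
  assumes "c \<noteq> 0" "upper N" "rmat N"
  shows "bnd P v \<Longrightarrow> \<exists>w. fin w \<and> (\<forall>n. of_int c * w n = v n + mulv N w n)"
proof (induction P arbitrary: v)
  case 0
  then have "v = (\<lambda>n. 0)" by (rule bnd0)
  then show ?case by (intro exI[of _ "\<lambda>n. 0"]) simp
next
  case (Suc p)
  define a where "a = of_real (1 / real_of_int c) * v p"
  define u where "u = (\<lambda>n. if n = p then a else (0::'r))"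
  have fu: "fin u" unfolding fin_def u_def
    by (rule finite_subset[of _ "{p}"]) auto
  have Nu: "mulv N u n = N n p * a" for n
  proof -
    have "mulv N u n = (\<Sum>j\<in>{p}. N n j * u j)"
      by (rule mulv_superset) (auto simp: u_def)
    then show ?thesis by (simp add: u_def)
  qed
  define v' where "v' = (\<lambda>n. v n - (if n = p then v p else 0) + mulv N u n)"
  have "bnd p v'"
    unfolding bnd_def
  proof (intro allI impI)
    fix n assume "p \<le> n"
    have "N n p = 0" using assms(2) \<open>p \<le> n\<close> unfolding upper_def by (meson leD)
    moreover have "n \<noteq> p \<Longrightarrow> v n = 0" using Suc.prems \<open>p \<le> n\<close> unfolding bnd_def by auto
    ultimately show "v' n = 0" unfolding v'_def Nu by auto
  qed
  from Suc.IH[OF this] obtain w' where w': "fin w'" "\<forall>n. of_int c * w' n = v' n + mulv N w' n" by blast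
  define w where "w = (\<lambda>n. 1 * w' n + u n)"
  have fw: "fin w" unfolding w_def by (rule fin_lin[OF w'(1) fu])
  have "of_int c * w n = v n + mulv N w n" for n
  proof -
    have Nw: "mulv N w n = mulv N w' n + mulv N u n"
      unfolding w_def using mulv_lin[OF w'(1) fu, of N 1 n] by simp
    have cu: "of_int c * u n = (if n = p then v p else 0)"
      unfolding u_def a_def using ofint_div[OF assms(1), of "v p"] by simp
    show ?thesis
      unfolding Nw using w'(2)[rule_format, of n] cu
      by (simp add: w_def v'_def distrib_left algebra_simps)
  qed
  then show ?case using fw by blast
qed


lemma sum_nz_ex: "sum f S \<noteq> 0 \<Longrightarrow> \<exists>x\<in>S. f x \<noteq> 0"
proof (rule ccontr)
  assume a: "sum f S \<noteq> 0" "\<not> (\<exists>x\<in>S. f x \<noteq> 0)"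
  then have "\<forall>x\<in>S. f x = 0" by blast
  then have "sum f S = 0" by (rule sum.neutral)
  then show False using a(1) by simp
qed

lemma fin_sum: "finite S \<Longrightarrow> (\<forall>x\<in>S. fin (f x)) \<Longrightarrow> fin (\<lambda>n. \<Sum>x\<in>S. (f x n::'r::comm_ring_1))"
proof -
  assume S: "finite S" "\<forall>x\<in>S. fin (f x)"
  have "{n. (\<Sum>x\<in>S. f x n) \<noteq> 0} \<subseteq> (\<Union>x\<in>S. {n. f x n \<noteq> 0})"
  proof
    fix n assume "n \<in> {n. (\<Sum>x\<in>S. f x n) \<noteq> 0}"
    then have "(\<Sum>x\<in>S. f x n) \<noteq> 0" by simp
    then obtain x where "x \<in> S" "f x n \<noteq> 0" by (blast dest: sum_nz_ex)
    then show "n \<in> (\<Union>x\<in>S. {n. f x n \<noteq> 0})" by blast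
  qed
  moreover have "finite (\<Union>x\<in>S. {n. f x n \<noteq> 0})" using S by (auto simp: fin_def)
  ultimately show ?thesis unfolding fin_def by (rule finite_subset)
qed

lemma le_mindex: "d' \<le> d \<Longrightarrow> d \<in> mindex N \<Longrightarrow> d' \<in> mindex N"
proof -
  assume a: "d' \<le> d" "d \<in> mindex N"
  have "d' i = 0" if "i \<notin> {1..N}" for i
  proof -
    have "d i = 0" using a(2) that by (simp add: mindex_def)
    moreover have "d' i \<le> d i" using a(1) by (simp add: le_fun_def)
    ultimately show ?thesis by simp
  qed
  then show ?thesis by (simp add: mindex_def)
qed

lemma finite_funs_bounded:
  "finite {f::nat\<Rightarrow>nat. (\<forall>x. x \<notin> I \<longrightarrow> f x = 0) \<and> (\<forall>x. f x \<le> B)}" if "finite I"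
proof -
  have "{f::nat\<Rightarrow>nat. (\<forall>x. x \<notin> I \<longrightarrow> f x = 0) \<and> (\<forall>x. f x \<le> B)}
      \<subseteq> {f. \<forall>x. (x \<in> I \<longrightarrow> f x \<in> {..B}) \<and> (x \<notin> I \<longrightarrow> f x = 0)}" by auto
  moreover have "finite {f. \<forall>x. (x \<in> I \<longrightarrow> f x \<in> {..B}) \<and> (x \<notin> I \<longrightarrow> f x = (0::nat))}"
    by (rule finite_set_of_finite_funs) (use that in auto)
  ultimately show ?thesis by (rule finite_subset)
qed

lemma finite_le_mindex: "d \<in> mindex N \<Longrightarrow> finite {d'. d' \<le> d}"
proof -
  assume d: "d \<in> mindex N"
  have "{d'. d' \<le> d} \<subseteq> {f::nat\<Rightarrow>nat. (\<forall>x. x \<notin> {1..N} \<longrightarrow> f x = 0) \<and> (\<forall>x. f x \<le> (\<Sum>i\<in>{1..N}. d i))}"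
  proof (clarify, intro conjI allI impI)
    fix d' x assume le: "d' \<le> d"
    show "x \<notin> {1..N} \<Longrightarrow> d' x = 0" using le_mindex[OF le d] unfolding mindex_def by simp
    show "d' x \<le> (\<Sum>i\<in>{1..N}. d i)"
    proof (cases "x \<in> {1..N}")
      case True
      then have "d x \<le> (\<Sum>i\<in>{1..N}. d i)" by (intro member_le_sum) auto
      moreover have "d' x \<le> d x" using le by (simp add: le_fun_def)
      ultimately show ?thesis by linarith
    next
      case False
      then show ?thesis using le_mindex[OF le d] unfolding mindex_def by simp
    qed
  qed
  moreover have "finite {f::nat\<Rightarrow>nat. (\<forall>x. x \<notin> {1..N} \<longrightarrow> f x = 0) \<and> (\<forall>x. f x \<le> (\<Sum>i\<in>{1..N}. d i))}"
    by (rule finite_funs_bounded) simp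
  ultimately show ?thesis by (rule finite_subset)
qed

lemma finite_abs_mindex: "finite {k \<in> mindex N. (\<Sum>i\<in>{1..N}. k i) \<le> h}"
proof -
  have "{k \<in> mindex N. (\<Sum>i\<in>{1..N}. k i) \<le> h} \<subseteq> {f::nat\<Rightarrow>nat. (\<forall>x. x \<notin> {1..N} \<longrightarrow> f x = 0) \<and> (\<forall>x. f x \<le> h)}"
  proof (clarify, intro conjI allI impI)
    fix k x assume k: "k \<in> mindex N" "(\<Sum>i\<in>{1..N}. k i) \<le> h"
    show "x \<notin> {1..N} \<Longrightarrow> k x = 0" using k unfolding mindex_def by auto
    show "k x \<le> h"
    proof (cases "x \<in> {1..N}")
      case True
      then have "k x \<le> (\<Sum>i\<in>{1..N}. k i)" by (intro member_le_sum) auto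
      then show ?thesis using k by linarith
    next
      case False
      then show ?thesis using k unfolding mindex_def by auto
    qed
  qed
  moreover have "finite {f::nat\<Rightarrow>nat. (\<forall>x. x \<notin> {1..N} \<longrightarrow> f x = 0) \<and> (\<forall>x. f x \<le> h)}"
    by (rule finite_funs_bounded) simp
  ultimately show ?thesis by (rule finite_subset)
qed

lemma diff_less_fun:
  fixes d d' :: "nat \<Rightarrow> nat"
  assumes "d' \<le> d" "d' \<noteq> (\<lambda>_. 0)" shows "d - d' < d"
proof -
  obtain x where x: "d' x \<noteq> 0" using assms(2) by auto
  have "d' x \<le> d x" using assms(1) by (simp add: le_fun_def)
  then have "(d - d') x < d x" using x by (simp add: fun_diff_def)
  moreover have "d - d' \<le> d" by (simp add: le_fun_def fun_diff_def)
  moreover have "\<not> d \<le> d - d'" using \<open>(d - d') x < d x\<close> by (simp add: le_fun_def not_le) (metis leD)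
  ultimately show ?thesis by (simp add: less_fun_def)
qed

lemma gspace_iff:
  "gspace l g \<longleftrightarrow> (\<forall>d. d \<notin> mindex (Suc l) \<longrightarrow> g d = (\<lambda>k n. 0)) \<and>
     (\<forall>d. (\<forall>k. fin (g d k)) \<and> finite {k. g d k \<noteq> (\<lambda>n. 0)} \<and> (\<forall>k. g d k \<noteq> (\<lambda>n. 0) \<longrightarrow> k \<in> mindex l))"
proof -
  have eq: "finite {(k, n). g d k n \<noteq> 0} \<longleftrightarrow> (\<forall>k. fin (g d k)) \<and> finite {k. g d k \<noteq> (\<lambda>n. 0)}" for d
  proof
    assume f: "finite {(k, n). g d k n \<noteq> 0}"
    have "fin (g d k)" for k
    proof -
      have "{n. g d k n \<noteq> 0} \<subseteq> snd ` {(k, n). g d k n \<noteq> 0}"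
      proof
        fix n assume "n \<in> {n. g d k n \<noteq> 0}"
        then show "n \<in> snd ` {(k, n). g d k n \<noteq> 0}" by (intro image_eqI[of _ _ "(k, n)"]) auto
      qed
      then show ?thesis using f unfolding fin_def by (meson finite_imageI finite_subset)
    qed
    moreover have "{k. g d k \<noteq> (\<lambda>n. 0)} \<subseteq> fst ` {(k, n). g d k n \<noteq> 0}"
    proof
      fix k assume "k \<in> {k. g d k \<noteq> (\<lambda>n. 0)}"
      then obtain n where "g d k n \<noteq> 0" by auto
      then show "k \<in> fst ` {(k, n). g d k n \<noteq> 0}" by (intro image_eqI[of _ _ "(k, n)"]) auto
    qed
    ultimately show "(\<forall>k. fin (g d k)) \<and> finite {k. g d k \<noteq> (\<lambda>n. 0)}" using f by (meson finite_imageI finite_subset)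
  next
    assume a: "(\<forall>k. fin (g d k)) \<and> finite {k. g d k \<noteq> (\<lambda>n. 0)}"
    have "{(k, n). g d k n \<noteq> 0} \<subseteq> Sigma {k. g d k \<noteq> (\<lambda>n. 0)} (\<lambda>k. {n. g d k n \<noteq> 0})" by auto
    moreover have "finite (Sigma {k. g d k \<noteq> (\<lambda>n. 0)} (\<lambda>k. {n. g d k n \<noteq> 0}))"
      using a by (auto simp: fin_def)
    ultimately show "finite {(k, n). g d k n \<noteq> 0}" by (rule finite_subset)
  qed
  have eq2: "(\<forall>k n. g d k n \<noteq> 0 \<longrightarrow> k \<in> mindex l) \<longleftrightarrow> (\<forall>k. g d k \<noteq> (\<lambda>n. 0) \<longrightarrow> k \<in> mindex l)" for d
    by (auto simp: fun_eq_iff)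
  show ?thesis unfolding gspace_def eq eq2 by blast
qed

locale P6 =
  fixes l :: nat and m :: "nat \<Rightarrow> nat"
    and A :: "nat \<Rightarrow> nat \<Rightarrow> nat \<Rightarrow> (nat \<Rightarrow> nat) \<Rightarrow> 'r::{real_algebra_1, comm_ring_1}"
  assumes A_mat: "\<forall>i\<in>{1..l}. emat l (A i)"
    and A_upper: "\<forall>i\<in>{1..l}. \<forall>n p. A i n p (\<lambda>_. 0) \<noteq> 0 \<longrightarrow> n < p"
begin

definition kabs :: "(nat \<Rightarrow> nat) \<Rightarrow> nat" where "kabs k = (\<Sum>i\<in>{1..l}. k i)"
definition lev :: "(nat \<Rightarrow> nat) \<Rightarrow> nat" where "lev d = (\<Sum>i\<in>{1..Suc l}. d i)"
definition iota :: "(nat \<Rightarrow> nat) \<Rightarrow> nat" where "iota k = (LEAST i. i \<in> {1..l} \<and> 0 < k i)"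
definition idx :: "(nat \<Rightarrow> nat) \<Rightarrow> nat" where
  "idx d = (LEAST i. i \<in> {1..l} \<and> int (d i) \<noteq> int (m i) * int (d (Suc l)))"
definition NN :: "nat \<Rightarrow> nat \<Rightarrow> nat \<Rightarrow> 'r" where "NN i = (\<lambda>n p. A i n p (\<lambda>_. 0))"
definition low :: "nat \<Rightarrow> ((nat \<Rightarrow> nat) \<Rightarrow> (nat \<Rightarrow> nat) \<Rightarrow> nat \<Rightarrow> 'r) \<Rightarrow> (nat \<Rightarrow> nat) \<Rightarrow> (nat \<Rightarrow> nat) \<Rightarrow> nat \<Rightarrow> 'r" where
  "low i g d k n = (\<Sum>d'\<in>{d'. d' \<le> d} - {\<lambda>_. 0}. mulv (\<lambda>n j. A i n j d') (g (d - d') k) n)"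
definition dec :: "(nat \<Rightarrow> nat) \<Rightarrow> nat \<Rightarrow> nat" where
  "dec k = k(iota k := k (iota k) - 1)"
definition releq :: "((nat \<Rightarrow> nat) \<Rightarrow> nat \<Rightarrow> 'r) \<Rightarrow> ((nat \<Rightarrow> nat) \<Rightarrow> (nat \<Rightarrow> nat) \<Rightarrow> nat \<Rightarrow> 'r) \<Rightarrow> (nat \<Rightarrow> nat) \<Rightarrow> bool" where
  "releq D g d \<longleftrightarrow> (if resonant l m d then g d (\<lambda>_. 0) = D d \<and>
      (\<forall>k\<in>mindex l. k \<noteq> (\<lambda>_. 0) \<longrightarrow> pder l m (iota k) g d (dec k) = amul (A (iota k)) g d (dec k))
     else (\<forall>k. pder l m (idx d) g d k = amul (A (idx d)) g d k))"
definition gok :: "((nat \<Rightarrow> nat) \<Rightarrow> (nat \<Rightarrow> nat) \<Rightarrow> nat \<Rightarrow> 'r) \<Rightarrow> (nat \<Rightarrow> nat) \<Rightarrow> bool" where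
  "gok g d \<longleftrightarrow> (\<forall>k. fin (g d k)) \<and> finite {k. g d k \<noteq> (\<lambda>n. 0)} \<and> (\<forall>k. g d k \<noteq> (\<lambda>n. 0) \<longrightarrow> k \<in> mindex l)"

lemma gspace_gok: "gspace l g \<longleftrightarrow> (\<forall>d. d \<notin> mindex (Suc l) \<longrightarrow> g d = (\<lambda>k n. 0)) \<and> (\<forall>d. gok g d)"
  unfolding gspace_iff gok_def by blast

lemma NN_upper: "i \<in> {1..l} \<Longrightarrow> upper (NN i)"
  using A_upper unfolding upper_def NN_def by blast

lemma col_rmat: "i \<in> {1..l} \<Longrightarrow> rmat (\<lambda>n j. A i n j d')"
proof -
  assume i: "i \<in> {1..l}"
  then have "\<forall>j. finite {n. A i n j \<noteq> (\<lambda>d. 0)}" using A_mat unfolding emat_def by blast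
  moreover have "{n. A i n j d' \<noteq> 0} \<subseteq> {n. A i n j \<noteq> (\<lambda>d. 0)}" for j by auto
  ultimately show ?thesis unfolding rmat_def by (meson finite_subset)
qed

lemma NN_rmat: "i \<in> {1..l} \<Longrightarrow> rmat (NN i)"
  unfolding NN_def by (rule col_rmat)

lemma amul_alt: "amul B g d k n = (\<Sum>d'\<in>{d'. d' \<le> d}. mulv (\<lambda>n j. B n j d') (g (d - d') k) n)"
  unfolding amul_def mulv_def by simp

lemma amul_split:
  assumes "d \<in> mindex (Suc l)"
  shows "amul (A i) g d k n = mulv (NN i) (g d k) n + low i g d k n"
proof -
  have f: "finite {d'. d' \<le> d}" using assms by (rule finite_le_mindex)
  have z: "(\<lambda>_. 0::nat) \<in> {d'. d' \<le> d}" by (simp add: le_fun_def)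
  have dz: "d - (\<lambda>_. 0) = d" by (simp add: fun_diff_def)
  show ?thesis unfolding amul_alt low_def
    using sum.remove[OF f z, of "\<lambda>d'. mulv (\<lambda>n j. A i n j d') (g (d - d') k) n"]
    by (simp add: dz NN_def)
qed

lemma low_local:
  assumes "\<forall>d'. d' < d \<longrightarrow> g d' = h d'"
  shows "low i g d = low i h d"
proof -
  have "g (d - d') = h (d - d')" if "d' \<in> {d'. d' \<le> d} - {\<lambda>_. 0}" for d'
    using assms diff_less_fun that by auto
  then show ?thesis unfolding low_def by (intro ext sum.cong) auto
qed

lemma low_props:
  assumes i: "i \<in> {1..l}" and d: "d \<in> mindex (Suc l)" and g: "\<forall>d'. d' < d \<longrightarrow> gok g d'"
  shows "(\<forall>k. fin (low i g d k)) \<and> finite {k. low i g d k \<noteq> (\<lambda>n. 0)} \<and>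
         (\<forall>k. low i g d k \<noteq> (\<lambda>n. 0) \<longrightarrow> k \<in> mindex l)"
proof -
  let ?S = "{d'. d' \<le> d} - {\<lambda>_. 0}"
  have fS: "finite ?S" using finite_le_mindex[OF d] by simp
  have gS: "gok g (d - d')" if "d' \<in> ?S" for d'
    using g diff_less_fun that by auto
  have "fin (low i g d k)" for k
  proof -
    have "fin (\<lambda>n. \<Sum>d'\<in>?S. mulv (\<lambda>n j. A i n j d') (g (d - d') k) n)"
      by (rule fin_sum[OF fS]) (use gS col_rmat[OF i] mulv_fin gok_def in blast)
    then show ?thesis unfolding low_def .
  qed
  moreover have sub: "{k. low i g d k \<noteq> (\<lambda>n. 0)} \<subseteq> (\<Union>d'\<in>?S. {k. g (d - d') k \<noteq> (\<lambda>n. 0)})"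
  proof
    fix k assume "k \<in> {k. low i g d k \<noteq> (\<lambda>n. 0)}"
    then obtain n where "low i g d k n \<noteq> 0" by auto
    then obtain d' where "d' \<in> ?S" "mulv (\<lambda>n j. A i n j d') (g (d - d') k) n \<noteq> 0"
      unfolding low_def by (blast dest: sum_nz_ex)
    then show "k \<in> (\<Union>d'\<in>?S. {k. g (d - d') k \<noteq> (\<lambda>n. 0)})" by force
  qed
  moreover have "finite (\<Union>d'\<in>?S. {k. g (d - d') k \<noteq> (\<lambda>n. 0)})"
    using fS gS unfolding gok_def by blast
  moreover have "\<forall>k. low i g d k \<noteq> (\<lambda>n. 0) \<longrightarrow> k \<in> mindex l"
    using sub gS unfolding gok_def by blast
  ultimately show ?thesis by (meson finite_subset)
qed

lemma amul_local:
  assumes "\<forall>d'. d' \<le> d \<longrightarrow> g d' = h d'"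
  shows "amul B g d = amul B h d"
proof -
  have "g (d - d') = h (d - d')" for d'
    using assms by (simp add: le_fun_def fun_diff_def)
  then show ?thesis unfolding amul_alt by (intro ext) simp
qed

lemma releq_local:
  assumes "\<forall>d'. d' \<le> d \<longrightarrow> g d' = h d'"
  shows "releq D g d = releq D h d"
proof -
  have gd: "g d = h d" using assms by simp
  have p: "pder l m i g d = pder l m i h d" for i
    unfolding pder_def gd by simp
  show ?thesis unfolding releq_def p amul_local[OF assms] gd by simp
qed

lemma amul_lin:
  assumes "\<forall>d k. fin (g d k)" "\<forall>d k. fin (h d k)"
  shows "amul B (\<lambda>d k n. a * g d k n + h d k n) d k n = a * amul B g d k n + amul B h d k n"
  unfolding amul_alt
  by (simp add: mulv_lin assms sum.distrib sum_distrib_left)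

lemma pder_lin:
  "pder l m i (\<lambda>d k n. a * g d k n + h d k n) d k n = a * pder l m i g d k n + pder l m i h d k n"
  unfolding pder_def by (simp add: algebra_simps)

lemma releq_lin:
  assumes "\<forall>d k. fin (g d k)" "\<forall>d k. fin (h d k)" "releq D g d" "releq D' h d"
  shows "releq (\<lambda>e n. a * D e n + D' e n) (\<lambda>d k n. a * g d k n + h d k n) d"
proof -
  have p: "pder l m i (\<lambda>d k n. a * g d k n + h d k n) d k = (\<lambda>n. a * pder l m i g d k n + pder l m i h d k n)" for i k
    by (rule ext, rule pder_lin)
  have q: "amul B (\<lambda>d k n. a * g d k n + h d k n) d k = (\<lambda>n. a * amul B g d k n + amul B h d k n)" for B k
    by (rule ext, rule amul_lin[OF assms(1,2)])
  show ?thesis using assms(3,4) unfolding releq_def p q by (auto split: if_splits)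
qed

lemma gspace_lin:
  fixes a :: 'r
  assumes "gspace l g" "gspace l h"
  shows "gspace l (\<lambda>d k n. a * g d k n + h d k n)"
proof -
  have "gok (\<lambda>d k n. a * g d k n + h d k n) d" for d
  proof -
    have g: "gok g d" "gok h d" using assms gspace_gok by blast+
    have "{k. (\<lambda>n. a * g d k n + h d k n) \<noteq> (\<lambda>n. 0)} \<subseteq> {k. g d k \<noteq> (\<lambda>n. 0)} \<union> {k. h d k \<noteq> (\<lambda>n. 0)}"
      by auto
    then have "finite {k. (\<lambda>n. a * g d k n + h d k n) \<noteq> (\<lambda>n. 0)}"
      using g unfolding gok_def by (meson finite_Un finite_subset)
    moreover have "\<forall>k. fin (\<lambda>n. a * g d k n + h d k n)" using g unfolding gok_def by (simp add: fin_lin)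
    moreover have "\<forall>k. (\<lambda>n. a * g d k n + h d k n) \<noteq> (\<lambda>n. 0) \<longrightarrow> k \<in> mindex l"
      using g unfolding gok_def by force
    ultimately show ?thesis unfolding gok_def by simp
  qed
  moreover have "\<forall>d. d \<notin> mindex (Suc l) \<longrightarrow> (\<lambda>k n. a * g d k n + h d k n) = (\<lambda>k n. 0)"
    using assms unfolding gspace_gok by (simp add: fun_eq_iff)
  ultimately show ?thesis unfolding gspace_gok by blast
qed

end


lemma ln_1d:
  fixes r :: "nat \<Rightarrow> nat \<Rightarrow> 'r::{real_algebra_1, comm_ring_1}"
  assumes c: "c \<noteq> 0" and N: "upper N" "rmat N" and r: "\<forall>j. fin (r j)" "\<forall>j>J. r j = (\<lambda>n. 0)"
  shows "\<exists>y. (\<forall>j. fin (y j)) \<and> (\<forall>j>J. y j = (\<lambda>n. 0)) \<and>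
     (\<forall>j n. of_nat (j + 1) * y (Suc j) n + of_int c * y j n = mulv N (y j) n + r j n)"
proof -
  have "\<exists>y. (\<forall>j. fin (y j)) \<and> (\<forall>j>J. y j = (\<lambda>n. 0)) \<and>
     (\<forall>j n. Suc J \<le> j + t \<longrightarrow> of_nat (j + 1) * y (Suc j) n + of_int c * y j n = mulv N (y j) n + r j n)" for t
  proof (induction t)
    case 0
    show ?case
      by (rule exI[of _ "\<lambda>j n. 0"]) (use r(2) in auto)
  next
    case (Suc t)
    then obtain y where y: "\<forall>j. fin (y j)" "\<forall>j>J. y j = (\<lambda>n. 0)"
      "\<forall>j n. Suc J \<le> j + t \<longrightarrow> of_nat (j + 1) * y (Suc j) n + of_int c * y j n = mulv N (y j) n + r j n"
      by blast
    show ?case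
    proof (cases "Suc J \<le> t")
      case True
      then show ?thesis using y by (intro exI[of _ y]) auto
    next
      case False
      define j0 where "j0 = J - t"
      have j0: "j0 + t = J" "j0 \<le> J" using False j0_def by auto
      define v where "v = (\<lambda>n. r j0 n + (- of_nat (j0 + 1)) * y (Suc j0) n)"
      have "fin v" unfolding v_def using fin_lin[of "y (Suc j0)" "r j0" "- of_nat (j0 + 1)"] y(1) r(1)
        by (simp add: add.commute)
      then obtain P where "bnd P v" using fin_bnd by blast
      from cN_surj[OF c N this] obtain w where w: "fin w" "\<forall>n. of_int c * w n = v n + mulv N w n"
        by blast
      define y' where "y' = y(j0 := w)"
      have "\<forall>j. fin (y' j)" using y(1) w(1) by (simp add: y'_def)
      moreover have "\<forall>j>J. y' j = (\<lambda>n. 0)" using y(2) j0 by (simp add: y'_def)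
      moreover have "of_nat (j + 1) * y' (Suc j) n + of_int c * y' j n = mulv N (y' j) n + r j n"
        if "Suc J \<le> j + Suc t" for j n
      proof (cases "j = j0")
        case True
        then show ?thesis using w(2)[rule_format, of n] by (simp add: y'_def v_def algebra_simps)
      next
        case False
        then have "Suc J \<le> j + t" "Suc j \<noteq> j0" using that j0 by auto
        then show ?thesis using y(3) False by (simp add: y'_def)
      qed
      ultimately show ?thesis by blast
    qed
  qed
  from this[of "Suc J"] show ?thesis by auto
qed

lemma mindex_upd: "i \<in> {1..l} \<Longrightarrow> k(i := j) \<in> mindex l \<Longrightarrow> k(i := j') \<in> mindex l"
  unfolding mindex_def by auto

lemma ln_multi:
  fixes r :: "(nat \<Rightarrow> nat) \<Rightarrow> nat \<Rightarrow> 'r::{real_algebra_1, comm_ring_1}"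
  assumes c: "c \<noteq> 0" and N: "upper N" "rmat N" and i: "i \<in> {1..l}"
    and r: "\<forall>k. fin (r k)" "finite {k. r k \<noteq> (\<lambda>n. 0)}" "\<forall>k. r k \<noteq> (\<lambda>n. 0) \<longrightarrow> k \<in> mindex l"
  shows "\<exists>x. (\<forall>k. fin (x k)) \<and> finite {k. x k \<noteq> (\<lambda>n. 0)} \<and> (\<forall>k. x k \<noteq> (\<lambda>n. 0) \<longrightarrow> k \<in> mindex l) \<and>
     (\<forall>k n. of_nat (k i + 1) * x (k(i := k i + 1)) n + of_int c * x k n = mulv N (x k) n + r k n)"
proof -
  define Pb where "Pb = (\<lambda>b y. (\<forall>j. fin (y j)) \<and> finite {j. y j \<noteq> (\<lambda>n. 0)} \<and>
     (\<forall>j n. of_nat (j + 1) * y (Suc j) n + of_int c * y j n = mulv N (y j) n + r (b(i := j)) n) \<and>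
     ((\<forall>j. r (b(i := j)) = (\<lambda>n. 0)) \<longrightarrow> y = (\<lambda>j n. 0)))"
  have "\<exists>y. Pb b y" for b
  proof (cases "\<forall>j. r (b(i := j)) = (\<lambda>n. 0)")
    case True
    then show ?thesis unfolding Pb_def by (intro exI[of _ "\<lambda>j n. 0"]) simp
  next
    case False
    have "{j. r (b(i := j)) \<noteq> (\<lambda>n. 0)} \<subseteq> (\<lambda>k. k i) ` {k. r k \<noteq> (\<lambda>n. 0)}"
    proof
      fix j assume "j \<in> {j. r (b(i := j)) \<noteq> (\<lambda>n. 0)}"
      then show "j \<in> (\<lambda>k. k i) ` {k. r k \<noteq> (\<lambda>n. 0)}" by (intro image_eqI[of _ _ "b(i := j)"]) auto
    qed
    then have "finite {j. r (b(i := j)) \<noteq> (\<lambda>n. 0)}" using r(2) by (meson finite_imageI finite_subset)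
    then obtain J where J: "\<forall>j\<in>{j. r (b(i := j)) \<noteq> (\<lambda>n. 0)}. j < J"
      using finite_nat_set_iff_bounded by blast
    then have "\<forall>j>J. r (b(i := j)) = (\<lambda>n. 0)" by force
    from ln_1d[OF c N, of "\<lambda>j. r (b(i := j))", OF _ this] r(1)
    obtain y where y: "\<forall>j. fin (y j)" "\<forall>j>J. y j = (\<lambda>n. 0)"
      "\<forall>j n. of_nat (j + 1) * y (Suc j) n + of_int c * y j n = mulv N (y j) n + r (b(i := j)) n"
      by blast
    have "{j. y j \<noteq> (\<lambda>n. 0)} \<subseteq> {..J}" using y(2) by (auto simp: not_le[symmetric])
    then have "finite {j. y j \<noteq> (\<lambda>n. 0)}" by (rule finite_subset) simp
    then show ?thesis unfolding Pb_def using y False by blast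
  qed
  then obtain Y where Y: "\<forall>b. Pb b (Y b)" by metis
  define x where "x = (\<lambda>k. Y (k(i := 0)) (k i))"
  have "\<forall>k. fin (x k)" using Y unfolding Pb_def x_def by blast
  moreover have eq: "\<forall>k n. of_nat (k i + 1) * x (k(i := k i + 1)) n + of_int c * x k n = mulv N (x k) n + r k n"
  proof (intro allI)
    fix k n
    have "of_nat (k i + 1) * Y (k(i := 0)) (Suc (k i)) n + of_int c * Y (k(i := 0)) (k i) n
        = mulv N (Y (k(i := 0)) (k i)) n + r ((k(i := 0))(i := k i)) n"
      using Y unfolding Pb_def by blast
    then show "of_nat (k i + 1) * x (k(i := k i + 1)) n + of_int c * x k n = mulv N (x k) n + r k n"
      unfolding x_def by simp
  qed
  moreover
  have nz: "\<exists>j. r ((k(i := 0))(i := j)) \<noteq> (\<lambda>n. 0)" if "x k \<noteq> (\<lambda>n. 0)" for k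
  proof (rule ccontr)
    assume "\<not> ?thesis"
    then have "Y (k(i := 0)) = (\<lambda>j n. 0)" using Y unfolding Pb_def by blast
    then show False using that unfolding x_def by simp
  qed
  have "\<forall>k. x k \<noteq> (\<lambda>n. 0) \<longrightarrow> k \<in> mindex l"
  proof (intro allI impI)
    fix k assume "x k \<noteq> (\<lambda>n. 0)"
    then obtain j where "r ((k(i := 0))(i := j)) \<noteq> (\<lambda>n. 0)" using nz by blast
    then have "k(i := j) \<in> mindex l" using r(3) by simp
    then have "k(i := k i) \<in> mindex l" by (rule mindex_upd[OF i])
    then show "k \<in> mindex l" by simp
  qed
  moreover have "finite {k. x k \<noteq> (\<lambda>n. 0)}"
  proof -
    let ?B = "(\<lambda>k. k(i := 0)) ` {k. r k \<noteq> (\<lambda>n. 0)}"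
    have "{k. x k \<noteq> (\<lambda>n. 0)} \<subseteq> (\<lambda>(b, j). b(i := j)) ` (Sigma ?B (\<lambda>b. {j. Y b j \<noteq> (\<lambda>n. 0)}))"
    proof
      fix k assume "k \<in> {k. x k \<noteq> (\<lambda>n. 0)}"
      then have xk: "x k \<noteq> (\<lambda>n. 0)" by simp
      then obtain j where j: "r ((k(i := 0))(i := j)) \<noteq> (\<lambda>n. 0)" using nz by blast
      have "k(i := 0) \<in> ?B" using j by (intro image_eqI[of _ _ "(k(i := 0))(i := j)"]) auto
      moreover have "Y (k(i := 0)) (k i) \<noteq> (\<lambda>n. 0)" using xk unfolding x_def by simp
      ultimately show "k \<in> (\<lambda>(b, j). b(i := j)) ` (Sigma ?B (\<lambda>b. {j. Y b j \<noteq> (\<lambda>n. 0)}))"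
        by (intro image_eqI[of _ _ "(k(i := 0), k i)"]) auto
    qed
    moreover have "finite (Sigma ?B (\<lambda>b. {j. Y b j \<noteq> (\<lambda>n. 0)}))"
      using r(2) Y unfolding Pb_def by blast
    ultimately show ?thesis by (meson finite_imageI finite_subset)
  qed
  ultimately show ?thesis by blast
qed


lemma bnd_Q:
  assumes "finite K" "\<forall>k\<in>K. fin (f k)"
  shows "\<exists>Q. \<forall>k\<in>K. bnd Q (f k)"
proof -
  have "finite (\<Union>k\<in>K. {n. f k n \<noteq> 0})" using assms by (auto simp: fin_def)
  then obtain Q where "\<forall>n\<in>(\<Union>k\<in>K. {n. f k n \<noteq> 0}). n < Q"
    using finite_nat_set_iff_bounded by blast
  then have "\<forall>k\<in>K. bnd Q (f k)" unfolding bnd_def using leD by blast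
  then show ?thesis by blast
qed

context P6
begin

lemma iota_props:
  assumes "k \<in> mindex l" "k \<noteq> (\<lambda>_. 0)"
  shows "iota k \<in> {1..l}" "0 < k (iota k)"
proof -
  obtain i where "k i \<noteq> 0" using assms(2) by auto
  then have "i \<in> {1..l} \<and> 0 < k i" using assms(1) unfolding mindex_def by auto
  then have "iota k \<in> {1..l} \<and> 0 < k (iota k)" unfolding iota_def by (rule LeastI)
  then show "iota k \<in> {1..l}" "0 < k (iota k)" by auto
qed

lemma dec_props:
  assumes "k \<in> mindex l" "k \<noteq> (\<lambda>_. 0)"
  shows "dec k \<in> mindex l" "Suc (kabs (dec k)) = kabs k" "(dec k)(iota k := dec k (iota k) + 1) = k"
    "dec k (iota k) + 1 = k (iota k)"
proof -
  note io = iota_props[OF assms]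
  show "dec k \<in> mindex l" using assms(1) io unfolding mindex_def dec_def by auto
  show "(dec k)(iota k := dec k (iota k) + 1) = k" using io by (auto simp: dec_def fun_eq_iff)
  show "dec k (iota k) + 1 = k (iota k)" using io by (auto simp: dec_def)
  have f: "finite {1..l}" by simp
  have "kabs k = k (iota k) + (\<Sum>i\<in>{1..l} - {iota k}. k i)"
    unfolding kabs_def using sum.remove[OF f io(1)] by simp
  moreover have "kabs (dec k) = dec k (iota k) + (\<Sum>i\<in>{1..l} - {iota k}. dec k i)"
    unfolding kabs_def using sum.remove[OF f io(1)] by simp
  moreover have "(\<Sum>i\<in>{1..l} - {iota k}. dec k i) = (\<Sum>i\<in>{1..l} - {iota k}. k i)"
    by (rule sum.cong) (auto simp: dec_def)
  ultimately show "Suc (kabs (dec k)) = kabs k" using io by (simp add: dec_def)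
qed

lemma kabs_zero: "kabs (\<lambda>_. 0) = 0" by (simp add: kabs_def)

lemma zero_mindex: "(\<lambda>_. 0) \<in> mindex N" by (simp add: mindex_def)

primrec lrs :: "(nat \<Rightarrow> (nat \<Rightarrow> nat) \<Rightarrow> nat \<Rightarrow> 'r) \<Rightarrow> (nat \<Rightarrow> 'r) \<Rightarrow> nat \<Rightarrow> (nat \<Rightarrow> nat) \<Rightarrow> nat \<Rightarrow> 'r" where
  "lrs r v 0 = (\<lambda>k. if k = (\<lambda>_. 0) then v else (\<lambda>n. 0))"
| "lrs r v (Suc h) = (\<lambda>k. if kabs k = Suc h \<and> k \<in> mindex l then
      (\<lambda>n. of_real (1 / real (k (iota k))) * (mulv (NN (iota k)) (lrs r v h (dec k)) n + r (iota k) (dec k) n))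
      else lrs r v h k)"

lemma lrs_stable: "lrs r v (kabs k + t) k = lrs r v (kabs k) k"
  by (induction t) auto

lemma lrs_nonmindex: "k \<notin> mindex l \<Longrightarrow> lrs r v h k = (\<lambda>n. 0)"
  by (induction h) (auto simp: zero_mindex)

lemma fin_scale_add: "fin u \<Longrightarrow> fin w \<Longrightarrow> fin (\<lambda>n. (c::'r) * (u n + w n))"
  unfolding fin_def
  by (rule finite_subset[of _ "{n. u n \<noteq> 0} \<union> {n. w n \<noteq> 0}"]) auto

lemma lr_exists:
  assumes v: "fin v"
    and r: "\<forall>i\<in>{1..l}. (\<forall>k. fin (r i k)) \<and> finite {k. r i k \<noteq> (\<lambda>n. 0)}"
  shows "\<exists>x. (\<forall>k. fin (x k)) \<and> finite {k. x k \<noteq> (\<lambda>n. 0)} \<and> (\<forall>k. x k \<noteq> (\<lambda>n. 0) \<longrightarrow> k \<in> mindex l) \<and>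
     x (\<lambda>_. 0) = v \<and>
     (\<forall>k\<in>mindex l. k \<noteq> (\<lambda>_. 0) \<longrightarrow> (\<forall>n. of_nat (k (iota k)) * x k n =
         mulv (NN (iota k)) (x (dec k)) n + r (iota k) (dec k) n))"
proof -
  define X where "X = (\<lambda>k. lrs r v (kabs k) k)"
  have finX: "\<forall>k. fin (lrs r v h k)" for h
  proof (induction h)
    case 0 then show ?case using v by simp
  next
    case (Suc h)
    show ?case
    proof
      fix k
      show "fin (lrs r v (Suc h) k)"
      proof (cases "kabs k = Suc h \<and> k \<in> mindex l")
        case True
        then have k0: "k \<noteq> (\<lambda>_. 0)" using kabs_zero by auto
        have "fin (mulv (NN (iota k)) (lrs r v h (dec k)))"
          using mulv_fin NN_rmat iota_props(1)[OF _ k0] True Suc by blast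
        moreover have "fin (r (iota k) (dec k))" using r iota_props(1)[OF _ k0] True by blast
        ultimately show ?thesis using True by (simp add: fin_scale_add)
      next
        case False
        then have "lrs r v (Suc h) k = lrs r v h k" by (simp only: lrs.simps if_False)
        then show ?thesis using Suc by simp
      qed
    qed
  qed
  have X0: "X (\<lambda>_. 0) = v" by (simp add: X_def kabs_zero)
  have Xeq: "of_nat (k (iota k)) * X k n = mulv (NN (iota k)) (X (dec k)) n + r (iota k) (dec k) n"
    if k: "k \<in> mindex l" "k \<noteq> (\<lambda>_. 0)" for k n
  proof -
    note dp = dec_props[OF k]
    have "X k = lrs r v (Suc (kabs (dec k))) k" unfolding X_def dp(2) ..
    also have "\<dots> = (\<lambda>n. of_real (1 / real (k (iota k))) * (mulv (NN (iota k)) (X (dec k)) n + r (iota k) (dec k) n))"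
    proof -
      have c: "kabs k = Suc (kabs (dec k)) \<and> k \<in> mindex l" using dp(2) k by simp
      show ?thesis unfolding X_def by (simp only: lrs.simps if_P[OF c])
    qed
    finally show ?thesis using ofnat_div[of "k (iota k)"] iota_props(2)[OF k] by simp
  qed
  have Xz: "X k = (\<lambda>n. 0)" if "k \<notin> mindex l" for k
    using lrs_nonmindex that by (simp add: X_def)
  have "finite (\<Union>i\<in>{1..l}. {k. r i k \<noteq> (\<lambda>n. 0)})" using r by auto
  then have "finite (kabs ` (\<Union>i\<in>{1..l}. {k. r i k \<noteq> (\<lambda>n. 0)}))" by simp
  then obtain B where B: "\<forall>x\<in>kabs ` (\<Union>i\<in>{1..l}. {k. r i k \<noteq> (\<lambda>n. 0)}). x < B"
    using finite_nat_set_iff_bounded by blast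
  have rB: "r i k = (\<lambda>n. 0)" if "i \<in> {1..l}" "B \<le> kabs k" for i k
  proof (rule ccontr)
    assume "r i k \<noteq> (\<lambda>n. 0)"
    then have "kabs k \<in> kabs ` (\<Union>i\<in>{1..l}. {k. r i k \<noteq> (\<lambda>n. 0)})" using that(1) by blast
    then have "kabs k < B" using B by blast
    then show False using that(2) by simp
  qed
  let ?K0 = "{k \<in> mindex l. kabs k \<le> B}"
  have "finite ?K0" using finite_abs_mindex[of l B] unfolding kabs_def by simp
  moreover have "\<forall>k\<in>?K0. fin (X k)" using finX by (simp add: X_def)
  ultimately obtain Q where Q: "\<forall>k\<in>?K0. bnd Q (X k)"
    using bnd_Q[of ?K0 X] by blast
  have bt: "\<forall>k\<in>mindex l. kabs k = B + t \<longrightarrow> bnd (Q - t) (X k)" for t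
  proof (induction t)
    case 0 then show ?case using Q by simp
  next
    case (Suc t)
    show ?case
    proof (intro ballI impI)
      fix k assume k: "k \<in> mindex l" "kabs k = B + Suc t"
      then have k0: "k \<noteq> (\<lambda>_. 0)" using kabs_zero by auto
      note dp = dec_props[OF k(1) k0]
      have kd: "kabs (dec k) = B + t" using dp(2) k(2) by simp
      have "r (iota k) (dec k) = (\<lambda>n. 0)" using rB iota_props(1)[OF k(1) k0] kd by simp
      then have Xk: "X k n = of_real (1 / real (k (iota k))) * mulv (NN (iota k)) (X (dec k)) n" for n
      proof -
        have "X k = lrs r v (Suc (kabs (dec k))) k" unfolding X_def dp(2) ..
        also have "\<dots> = (\<lambda>n. of_real (1 / real (k (iota k))) * (mulv (NN (iota k)) (X (dec k)) n + r (iota k) (dec k) n))"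
        proof -
          have c: "kabs k = Suc (kabs (dec k)) \<and> k \<in> mindex l" using dp(2) k by simp
          show ?thesis unfolding X_def by (simp only: lrs.simps if_P[OF c])
        qed
        finally show ?thesis using \<open>r (iota k) (dec k) = (\<lambda>n. 0)\<close> by simp
      qed
      have "bnd (Q - t) (X (dec k))" using Suc.IH dp(1) kd by blast
      then have "bnd (Q - t - 1) (mulv (NN (iota k)) (X (dec k)))"
        by (rule mulv_upper_bnd[OF NN_upper[OF iota_props(1)[OF k(1) k0]]])
      then show "bnd (Q - Suc t) (X k)" unfolding bnd_def Xk by simp
    qed
  qed
  have "{k. X k \<noteq> (\<lambda>n. 0)} \<subseteq> {k \<in> mindex l. (\<Sum>i\<in>{1..l}. k i) \<le> B + Q}"
  proof
    fix k assume "k \<in> {k. X k \<noteq> (\<lambda>n. 0)}"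
    then have k: "X k \<noteq> (\<lambda>n. 0)" by simp
    then have km: "k \<in> mindex l" using Xz by blast
    have "kabs k \<le> B + Q"
    proof (rule ccontr)
      assume "\<not> kabs k \<le> B + Q"
      define t where "t = kabs k - B"
      have t: "kabs k = B + t" "Q \<le> t" using \<open>\<not> kabs k \<le> B + Q\<close> t_def by auto
      have "bnd (Q - t) (X k)" using bt km t(1) by blast
      moreover have "Q - t = 0" using t(2) by simp
      ultimately have "bnd 0 (X k)" by simp
      then show False using k bnd0 by blast
    qed
    then show "k \<in> {k \<in> mindex l. (\<Sum>i\<in>{1..l}. k i) \<le> B + Q}" using km by (simp add: kabs_def)
  qed
  then have "finite {k. X k \<noteq> (\<lambda>n. 0)}" using finite_abs_mindex by (rule finite_subset)
  moreover have "\<forall>k. fin (X k)" using finX X_def by simp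
  ultimately show ?thesis using X0 Xeq Xz by blast
qed

end


lemma ln_uniq:
  fixes x :: "(nat \<Rightarrow> nat) \<Rightarrow> nat \<Rightarrow> 'r::{real_algebra_1, comm_ring_1}"
  assumes c: "c \<noteq> 0" and N: "upper N"
    and x: "\<forall>k. fin (x k)" "finite {k. x k \<noteq> (\<lambda>n. 0)}"
    and eq: "\<forall>k n. of_nat (k i + 1) * x (k(i := k i + 1)) n + of_int c * x k n = mulv N (x k) n"
  shows "x k = (\<lambda>n. 0)"
proof (rule ccontr)
  assume nz: "x k \<noteq> (\<lambda>n. 0)"
  let ?S = "{k. x k \<noteq> (\<lambda>n. 0)}"
  have ne: "(\<lambda>k. k i) ` ?S \<noteq> {}" using nz by blast
  have fi: "finite ((\<lambda>k. k i) ` ?S)" using x(2) by simp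
  define M where "M = Max ((\<lambda>k. k i) ` ?S)"
  have "M \<in> (\<lambda>k. k i) ` ?S" unfolding M_def by (rule Max_in[OF fi ne])
  then obtain k0 where k0: "k0 \<in> ?S" "k0 i = M" by blast
  have "k0(i := k0 i + 1) \<notin> ?S"
  proof
    assume "k0(i := k0 i + 1) \<in> ?S"
    then have "(k0(i := k0 i + 1)) i \<le> M" unfolding M_def using Max_ge[OF fi] by blast
    then show False using k0(2) by simp
  qed
  then have z: "x (k0(i := k0 i + 1)) = (\<lambda>n. 0)" by simp
  have "\<forall>n. of_int c * x k0 n = mulv N (x k0) n"
  proof
    fix n
    have "of_nat (k0 i + 1) * x (k0(i := k0 i + 1)) n + of_int c * x k0 n = mulv N (x k0) n" using eq by blast
    then show "of_int c * x k0 n = mulv N (x k0) n" using z by simp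
  qed
  then have "x k0 = (\<lambda>n. 0)" using cN_inj[OF c N] x(1) by blast
  then show False using k0(1) by simp
qed

context P6
begin

definition rsol where
  "rsol D g \<longleftrightarrow> gspace l g \<and> (\<forall>d\<in>mindex (Suc l). releq D g d)"

definition dfin :: "((nat \<Rightarrow> nat) \<Rightarrow> nat \<Rightarrow> 'r) \<Rightarrow> bool" where
  "dfin D \<longleftrightarrow> (\<forall>e. fin (D e))"

lemma idx_props:
  assumes "\<not> resonant l m d"
  shows "idx d \<in> {1..l}" "int (d (idx d)) \<noteq> int (m (idx d)) * int (d (Suc l))"
proof -
  obtain i where "i \<in> {1..l}" "d i \<noteq> m i * d (Suc l)" using assms unfolding resonant_def by blast
  then have "int (d i) \<noteq> int (m i * d (Suc l))" by (simp only: of_nat_eq_iff not_False_eq_True)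
  then have "int (d i) \<noteq> int (m i) * int (d (Suc l))" by (simp only: of_nat_mult not_False_eq_True)
  then have "i \<in> {1..l} \<and> int (d i) \<noteq> int (m i) * int (d (Suc l))" using \<open>i \<in> {1..l}\<close> by simp
  then have "idx d \<in> {1..l} \<and> int (d (idx d)) \<noteq> int (m (idx d)) * int (d (Suc l))"
    unfolding idx_def by (rule LeastI)
  then show "idx d \<in> {1..l}" "int (d (idx d)) \<noteq> int (m (idx d)) * int (d (Suc l))" by auto
qed

lemma res_coeff:
  assumes "resonant l m d" "i \<in> {1..l}"
  shows "int (d i) - int (m i) * int (d (Suc l)) = 0"
proof -
  have "d i = m i * d (Suc l)" using assms unfolding resonant_def by blast
  then show ?thesis by simp
qed

lemma lev_mono: "d' \<le> d \<Longrightarrow> lev d' \<le> lev d"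
  unfolding lev_def by (rule sum_mono) (simp add: le_fun_def)

lemma lev_less:
  assumes d: "d \<in> mindex (Suc l)" and lt: "d' < d"
  shows "lev d' < lev d"
proof -
  have le: "\<forall>x. d' x \<le> d x" using lt by (simp add: less_fun_def le_fun_def)
  have "\<not> d \<le> d'" using lt by (simp add: less_fun_def)
  then obtain x where "\<not> d x \<le> d' x" unfolding le_fun_def by blast
  then have x: "d' x < d x" by simp
  have xin: "x \<in> {1..Suc l}"
  proof (rule ccontr)
    assume "x \<notin> {1..Suc l}"
    then have "d x = 0" using d by (simp add: mindex_def)
    then show False using x by simp
  qed
  have "\<forall>i\<in>{1..Suc l}. d' i \<le> d i" using le by blast
  moreover have "\<exists>a\<in>{1..Suc l}. d' a < d a" using x xin by blast
  ultimately show ?thesis unfolding lev_def by (rule sum_strict_mono_ex1[OF finite_atLeastAtMost])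
qed

lemma gok_upd: "gok (g(d := x)) d \<longleftrightarrow> (\<forall>k. fin (x k)) \<and> finite {k. x k \<noteq> (\<lambda>n. 0)} \<and> (\<forall>k. x k \<noteq> (\<lambda>n. 0) \<longrightarrow> k \<in> mindex l)"
  unfolding gok_def by simp

lemma gok_same: "g d = h d \<Longrightarrow> gok g d = gok h d"
  unfolding gok_def by simp

lemma low_upd: "low i (g(d := x)) d = low i g d"
  by (rule low_local) (auto simp: less_fun_def)

lemma loc_exists:
  assumes d: "d \<in> mindex (Suc l)" and g: "\<forall>d'. d' < d \<longrightarrow> gok g d'" and D: "fin (D d)"
  shows "\<exists>x. gok (g(d := x)) d \<and> releq D (g(d := x)) d"
proof (cases "resonant l m d")
  case False
  note ip = idx_props[OF False]
  define i where "i = idx d"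
  define c where "c = int (d i) - int (m i) * int (d (Suc l))"
  have c0: "c \<noteq> 0" using ip(2) unfolding c_def i_def by simp
  have i: "i \<in> {1..l}" using ip(1) i_def by simp
  from ln_multi[OF c0 NN_upper[OF i] NN_rmat[OF i] i, of "low i g d"] low_props[OF i d g]
  obtain x where x: "\<forall>k. fin (x k)" "finite {k. x k \<noteq> (\<lambda>n. 0)}" "\<forall>k. x k \<noteq> (\<lambda>n. 0) \<longrightarrow> k \<in> mindex l"
    "\<forall>k n. of_nat (k i + 1) * x (k(i := k i + 1)) n + of_int c * x k n = mulv (NN i) (x k) n + low i g d k n"
    by blast
  have "releq D (g(d := x)) d"
    unfolding releq_def using False
  proof (simp only: if_False, intro allI ext)
    fix k n
    show "pder l m (idx d) (g(d := x)) d k n = amul (A (idx d)) (g(d := x)) d k n"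
      unfolding amul_split[OF d] low_upd using x(4) by (simp add: pder_def c_def i_def)
  qed
  moreover have "gok (g(d := x)) d" using x unfolding gok_upd by blast
  ultimately show ?thesis by blast
next
  case True
  have r: "\<forall>i\<in>{1..l}. (\<forall>k. fin (low i g d k)) \<and> finite {k. low i g d k \<noteq> (\<lambda>n. 0)}"
    using low_props[OF _ d g] by blast
  from lr_exists[OF D r]
  obtain x where x: "\<forall>k. fin (x k)" "finite {k. x k \<noteq> (\<lambda>n. 0)}" "\<forall>k. x k \<noteq> (\<lambda>n. 0) \<longrightarrow> k \<in> mindex l"
    "x (\<lambda>_. 0) = D d"
    "\<forall>k\<in>mindex l. k \<noteq> (\<lambda>_. 0) \<longrightarrow> (\<forall>n. of_nat (k (iota k)) * x k n =
         mulv (NN (iota k)) (x (dec k)) n + low (iota k) g d (dec k) n)"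
    by blast
  have "releq D (g(d := x)) d"
    unfolding releq_def using True
  proof (simp only: if_True, intro conjI ballI impI)
    show "(g(d := x)) d (\<lambda>_. 0) = D d" using x(4) by simp
    fix k assume k: "k \<in> mindex l" "k \<noteq> (\<lambda>_. 0)"
    show "pder l m (iota k) (g(d := x)) d (dec k) = amul (A (iota k)) (g(d := x)) d (dec k)"
    proof
    fix n
    note io = iota_props[OF k]
    note dp = dec_props[OF k]
    have "pder l m (iota k) (g(d := x)) d (dec k) n = of_nat (k (iota k)) * x k n"
      unfolding pder_def using res_coeff[OF True io(1)] dp(3) dp(4) by simp
    also have "\<dots> = mulv (NN (iota k)) (x (dec k)) n + low (iota k) g d (dec k) n"
      using x(5) k by blast
    also have "\<dots> = amul (A (iota k)) (g(d := x)) d (dec k) n"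
      unfolding amul_split[OF d] low_upd by simp
    finally show "pder l m (iota k) (g(d := x)) d (dec k) n = amul (A (iota k)) (g(d := x)) d (dec k) n" .
    qed
  qed
  moreover have "gok (g(d := x)) d" using x unfolding gok_upd by blast
  ultimately show ?thesis by blast
qed

end


context P6
begin

definition gstep where
  "gstep D h g = (\<lambda>d. if lev d = h \<and> d \<in> mindex (Suc l)
     then (SOME x. gok (g(d := x)) d \<and> releq D (g(d := x)) d) else g d)"

primrec glev where
  "glev D 0 = gstep D 0 (\<lambda>d k n. 0)"
| "glev D (Suc h) = gstep D (Suc h) (glev D h)"

definition Inv where
  "Inv D h G \<longleftrightarrow> (\<forall>d. gok G d) \<and> (\<forall>d. d \<notin> mindex (Suc l) \<longrightarrow> G d = (\<lambda>k n. 0)) \<and>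
     (\<forall>d\<in>mindex (Suc l). lev d \<le> h \<longrightarrow> releq D G d)"

lemma gstep_inv:
  assumes D: "dfin D" and G: "\<forall>d. gok G d" "\<forall>d. d \<notin> mindex (Suc l) \<longrightarrow> G d = (\<lambda>k n. 0)"
    "\<forall>d\<in>mindex (Suc l). lev d < h \<longrightarrow> releq D G d"
  shows "Inv D h (gstep D h G)"
proof -
  let ?G' = "gstep D h G"
  have same: "?G' d = G d" if "\<not> (lev d = h \<and> d \<in> mindex (Suc l))" for d
  proof -
    have "(lev d = h \<and> d \<in> mindex (Suc l)) = False" using that by simp
    then show ?thesis by (simp only: gstep_def if_False)
  qed
  have new: "gok ?G' d \<and> releq D ?G' d" if d: "lev d = h" "d \<in> mindex (Suc l)" for d
  proof -
    define P where "P = (\<lambda>x. gok (G(d := x)) d \<and> releq D (G(d := x)) d)"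
    have ex: "\<exists>x. P x" unfolding P_def
      by (rule loc_exists[OF d(2)]) (use G(1) D in \<open>auto simp: dfin_def\<close>)
    have G'd: "?G' d = (SOME x. P x)" using d by (simp add: gstep_def P_def)
    have Px: "P (?G' d)" unfolding G'd using ex by (rule someI_ex)
    have agree: "\<forall>d'. d' \<le> d \<longrightarrow> ?G' d' = (G(d := ?G' d)) d'"
    proof (intro allI impI)
      fix d' assume "d' \<le> d"
      show "?G' d' = (G(d := ?G' d)) d'"
      proof (cases "d' = d")
        case True then show ?thesis by simp
      next
        case False
        then have "d' < d" using \<open>d' \<le> d\<close> by simp
        then have "lev d' < h" using lev_less[OF d(2)] d(1) by blast
        then show ?thesis using same False by simp
      qed
    qed
    have "releq D ?G' d" using Px releq_local[OF agree] unfolding P_def by blast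
    moreover have "gok ?G' d" using Px gok_same[of ?G' d "G(d := ?G' d)"] unfolding P_def by simp
    ultimately show ?thesis by blast
  qed
  have "\<forall>d. gok ?G' d"
  proof
    fix d show "gok ?G' d"
    proof (cases "lev d = h \<and> d \<in> mindex (Suc l)")
      case True then show ?thesis using new by blast
    next
      case False then show ?thesis using same G(1) gok_same by metis
    qed
  qed
  moreover have "\<forall>d. d \<notin> mindex (Suc l) \<longrightarrow> ?G' d = (\<lambda>k n. 0)" using same G(2) by simp
  moreover have "\<forall>d\<in>mindex (Suc l). lev d \<le> h \<longrightarrow> releq D ?G' d"
  proof (intro ballI impI)
    fix d assume d: "d \<in> mindex (Suc l)" "lev d \<le> h"
    show "releq D ?G' d"
    proof (cases "lev d = h")
      case True then show ?thesis using new d by blast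
    next
      case False
      then have lt: "lev d < h" using d by simp
      have "\<forall>d'. d' \<le> d \<longrightarrow> ?G' d' = G d'"
      proof (intro allI impI)
        fix d' assume "d' \<le> d"
        then have "lev d' < h" using lev_mono lt by (meson le_less_trans)
        then show "?G' d' = G d'" using same by simp
      qed
      then have "releq D ?G' d = releq D G d" by (rule releq_local)
      then show ?thesis using G(3) d lt by blast
    qed
  qed
  ultimately show ?thesis unfolding Inv_def by blast
qed

lemma glev_inv: "dfin D \<Longrightarrow> Inv D h (glev D h)"
proof (induction h)
  case 0
  have "gok (\<lambda>d k n. 0) d" for d by (simp add: gok_def)
  then show ?case using gstep_inv[OF 0] by simp
next
  case (Suc h)
  then have I: "Inv D h (glev D h)" by blast
  show ?case unfolding glev.simps
    by (rule gstep_inv[OF Suc.prems]) (use I in \<open>auto simp: Inv_def\<close>)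
qed

lemma glev_stable: "glev D (lev d + t) d = glev D (lev d) d"
  by (induction t) (auto simp: gstep_def)

definition Gsol where "Gsol D = (\<lambda>d. glev D (lev d) d)"


lemma Gsol_rsol:
  assumes D: "dfin D" shows "rsol D (Gsol D)"
proof -
  have gsp: "gspace l (Gsol D)"
    unfolding gspace_gok
  proof (intro conjI allI impI)
    fix d
    have I: "Inv D (lev d) (glev D (lev d))" by (rule glev_inv[OF D])
    show "d \<notin> mindex (Suc l) \<Longrightarrow> Gsol D d = (\<lambda>k n. 0)" using I unfolding Inv_def Gsol_def by blast
    show "gok (Gsol D) d" using I gok_same[of "Gsol D" d "glev D (lev d)"] unfolding Inv_def Gsol_def by simp
  qed
  have "releq D (Gsol D) d" if d: "d \<in> mindex (Suc l)" for d
  proof -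
    have I: "Inv D (lev d) (glev D (lev d))" by (rule glev_inv[OF D])
    have "\<forall>d'. d' \<le> d \<longrightarrow> Gsol D d' = glev D (lev d) d'"
    proof (intro allI impI)
      fix d' assume "d' \<le> d"
      then have "lev d' \<le> lev d" by (rule lev_mono)
      then have "lev d = lev d' + (lev d - lev d')" by simp
      then show "Gsol D d' = glev D (lev d) d'" unfolding Gsol_def using glev_stable by metis
    qed
    then have "releq D (Gsol D) d = releq D (glev D (lev d)) d" by (rule releq_local)
    then show ?thesis using I d unfolding Inv_def by blast
  qed
  then show ?thesis using gsp unfolding rsol_def by blast
qed

definition Rsol where "Rsol D = (SOME g. rsol D g)"

lemma Rsol_rsol: "dfin D \<Longrightarrow> rsol D (Rsol D)"
  unfolding Rsol_def by (rule someI_ex[of "rsol D"]) (use Gsol_rsol in blast)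

lemma lr_uniq:
  assumes out: "\<forall>k. k \<notin> mindex l \<longrightarrow> x k = (\<lambda>n. 0)" and x0: "x (\<lambda>_. 0) = (\<lambda>n. 0)"
    and eq: "\<forall>k\<in>mindex l. k \<noteq> (\<lambda>_. 0) \<longrightarrow> (\<forall>n. of_nat (k (iota k)) * x k n = mulv (NN (iota k)) (x (dec k)) n)"
  shows "x k = (\<lambda>n. 0)"
proof (induction "kabs k" arbitrary: k rule: less_induct)
  case less
  show ?case
  proof (cases "k \<in> mindex l \<and> k \<noteq> (\<lambda>_. 0)")
    case False
    then show ?thesis using out x0 by blast
  next
    case True
    then have k: "k \<in> mindex l" "k \<noteq> (\<lambda>_. 0)" by auto
    have "kabs (dec k) < kabs k" using dec_props(2)[OF k] by simp
    then have z: "x (dec k) = (\<lambda>n. 0)" using less by blast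
    show ?thesis
    proof
      fix n
      have "of_nat (k (iota k)) * x k n = 0" using eq k z by simp
      then show "x k n = 0" using ofnat_cancel iota_props(2)[OF k] by (metis not_less0 zero_less_iff_neq_zero)
    qed
  qed
qed

lemma low_zero: "low i (\<lambda>d k n. 0) d = (\<lambda>k n. 0)"
  unfolding low_def by (simp add: fun_eq_iff)

lemma uniq0:
  assumes g: "rsol D g" and d0: "d0 \<in> mindex (Suc l)"
    and D: "\<forall>e. e \<le> d0 \<longrightarrow> resonant l m e \<longrightarrow> D e = (\<lambda>n. 0)"
  shows "g d0 = (\<lambda>k n. 0)"
proof -
  have gs: "gspace l g" and rel: "\<forall>d\<in>mindex (Suc l). releq D g d" using g unfolding rsol_def by auto
  have gk: "\<forall>d. gok g d" using gs unfolding gspace_gok by blast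
  have "\<forall>d. d \<in> mindex (Suc l) \<and> d \<le> d0 \<and> lev d < h \<longrightarrow> g d = (\<lambda>k n. 0)" for h
  proof (induction h)
    case 0 then show ?case by simp
  next
    case (Suc h)
    show ?case
    proof (intro allI impI)
      fix d assume d: "d \<in> mindex (Suc l) \<and> d \<le> d0 \<and> lev d < Suc h"
      have lowd: "\<forall>d'. d' < d \<longrightarrow> g d' = (\<lambda>d k n. 0) d'"
      proof (intro allI impI)
        fix d' assume "d' < d"
        then have "d' \<in> mindex (Suc l)" "d' \<le> d0" "lev d' < h"
          using le_mindex[of d' d] d lev_less[of d d'] order.trans[of d' d d0] by auto
        then show "g d' = (\<lambda>d k n. 0) d'" using Suc.IH by blast
      qed
      have lowz: "low i g d = (\<lambda>k n. 0)" for i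
        using low_local[OF lowd] low_zero by simp
      have am: "amul (A i) g d k n = mulv (NN i) (g d k) n" for i k n
        using amul_split[OF conjunct1[OF d], of i g k n] lowz by simp
      have rd: "releq D g d" using rel d by blast
      show "g d = (\<lambda>k n. 0)"
      proof (cases "resonant l m d")
        case False
        note ip = idx_props[OF False]
        define i where "i = idx d"
        define c where "c = int (d i) - int (m i) * int (d (Suc l))"
        have c0: "c \<noteq> 0" using ip(2) unfolding c_def i_def by simp
        have i: "i \<in> {1..l}" using ip(1) i_def by simp
        have eq: "\<forall>k n. of_nat (k i + 1) * g d (k(i := k i + 1)) n + of_int c * g d k n = mulv (NN i) (g d k) n"
        proof (intro allI)
          fix k n
          have "pder l m i g d k n = amul (A i) g d k n" using rd False unfolding releq_def i_def by simp
          then show "of_nat (k i + 1) * g d (k(i := k i + 1)) n + of_int c * g d k n = mulv (NN i) (g d k) n"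
            unfolding am pder_def c_def by simp
        qed
        have "g d k = (\<lambda>n. 0)" for k
          by (rule ln_uniq[OF c0 NN_upper[OF i], of "g d"]) (use gk eq in \<open>auto simp: gok_def\<close>)
        then show ?thesis by (simp add: fun_eq_iff)
      next
        case True
        have out: "\<forall>k. k \<notin> mindex l \<longrightarrow> g d k = (\<lambda>n. 0)" using gk unfolding gok_def by blast
        have x0: "g d (\<lambda>_. 0) = (\<lambda>n. 0)" using rd True D d unfolding releq_def by simp
        have eq: "\<forall>k\<in>mindex l. k \<noteq> (\<lambda>_. 0) \<longrightarrow> (\<forall>n. of_nat (k (iota k)) * g d k n = mulv (NN (iota k)) (g d (dec k)) n)"
        proof (intro ballI impI allI)
          fix k n assume k: "k \<in> mindex l" "k \<noteq> (\<lambda>_. 0)"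
          note io = iota_props[OF k]
          note dp = dec_props[OF k]
          have "pder l m (iota k) g d (dec k) = amul (A (iota k)) g d (dec k)"
            using rd True k unfolding releq_def by simp
          then have "pder l m (iota k) g d (dec k) n = amul (A (iota k)) g d (dec k) n" by simp
          moreover have "pder l m (iota k) g d (dec k) n = of_nat (k (iota k)) * g d k n"
            unfolding pder_def using res_coeff[OF True io(1)] dp(3) dp(4) by simp
          ultimately show "of_nat (k (iota k)) * g d k n = mulv (NN (iota k)) (g d (dec k)) n"
            unfolding am by simp
        qed
        have "g d k = (\<lambda>n. 0)" for k using lr_uniq[OF out x0 eq] .
        then show ?thesis by (simp add: fun_eq_iff)
      qed
    qed
  qed
  then show ?thesis using d0 by blast
qed

lemma gspace_fin: "gspace l (g :: _ \<Rightarrow> _ \<Rightarrow> nat \<Rightarrow> 'r) \<Longrightarrow> \<forall>d k. fin (g d k)"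
  unfolding gspace_gok gok_def by blast

lemma uniq2:
  assumes g: "rsol D g" and h: "rsol D' h" and d0: "d0 \<in> mindex (Suc l)"
    and DD: "\<forall>e. e \<le> d0 \<longrightarrow> resonant l m e \<longrightarrow> D e = D' e"
  shows "g d0 = h d0"
proof -
  have gs: "gspace l g" "gspace l h" using g h unfolding rsol_def by auto
  have "rsol (\<lambda>e n. (-1) * D' e n + D e n) (\<lambda>d k n. (-1) * h d k n + g d k n)"
    unfolding rsol_def
  proof (intro conjI ballI)
    show "gspace l (\<lambda>d k n. (-1) * h d k n + g d k n)" by (rule gspace_lin[OF gs(2) gs(1)])
    fix d assume "d \<in> mindex (Suc l)"
    then show "releq (\<lambda>e n. (-1) * D' e n + D e n) (\<lambda>d k n. (-1) * h d k n + g d k n) d"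
      using releq_lin[OF gspace_fin[OF gs(2)] gspace_fin[OF gs(1)]] g h unfolding rsol_def by blast
  qed
  from uniq0[OF this d0] DD have "(\<lambda>k n. (-1) * h d0 k n + g d0 k n) = (\<lambda>k n. 0)" by auto
  then show ?thesis by (auto simp: fun_eq_iff algebra_simps)
qed

end


context P6
begin

lemma rsol_eq: "rsol D g \<Longrightarrow> rsol D h \<Longrightarrow> g = h"
proof
  fix d assume g: "rsol D g" and h: "rsol D h"
  show "g d = h d"
  proof (cases "d \<in> mindex (Suc l)")
    case True then show ?thesis using uniq2[OF g h True] by blast
  next
    case False then show ?thesis using g h unfolding rsol_def gspace_gok by simp
  qed
qed

lemma dfin_lin: "dfin D \<Longrightarrow> dfin D' \<Longrightarrow> dfin (\<lambda>e n. a * D e n + D' e n)"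
  unfolding dfin_def by (simp add: fin_lin)

lemma Rsol_lin:
  assumes "dfin D" "dfin D'"
  shows "Rsol (\<lambda>e n. a * D e n + D' e n) = (\<lambda>d k n. a * Rsol D d k n + Rsol D' d k n)"
proof (rule rsol_eq)
  show "rsol (\<lambda>e n. a * D e n + D' e n) (Rsol (\<lambda>e n. a * D e n + D' e n))"
    by (rule Rsol_rsol[OF dfin_lin[OF assms]])
  have r: "rsol D (Rsol D)" "rsol D' (Rsol D')" using Rsol_rsol assms by auto
  show "rsol (\<lambda>e n. a * D e n + D' e n) (\<lambda>d k n. a * Rsol D d k n + Rsol D' d k n)"
    unfolding rsol_def
  proof (intro conjI ballI)
    have gs: "gspace l (Rsol D)" "gspace l (Rsol D')" using r unfolding rsol_def by auto
    show "gspace l (\<lambda>d k n. a * Rsol D d k n + Rsol D' d k n)" by (rule gspace_lin[OF gs])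
    fix d assume "d \<in> mindex (Suc l)"
    then show "releq (\<lambda>e n. a * D e n + D' e n) (\<lambda>d k n. a * Rsol D d k n + Rsol D' d k n) d"
      using releq_lin[OF gspace_fin[OF gs(1)] gspace_fin[OF gs(2)]] r unfolding rsol_def by blast
  qed
qed

lemma Rsol_zero: "Rsol (\<lambda>e n. 0) = (\<lambda>d k n. 0)"
proof (rule rsol_eq)
  show "rsol (\<lambda>e n. 0) (Rsol (\<lambda>e n. 0))" by (rule Rsol_rsol) (simp add: dfin_def)
  have gz: "\<forall>d. gok (\<lambda>d k n. 0::'r) d" by (simp add: gok_def)
  then have "gspace l (\<lambda>d k n. 0::'r)" unfolding gspace_gok by simp
  moreover have "releq (\<lambda>e n. 0) (\<lambda>d k n. 0) d" for d
    unfolding releq_def by (simp add: pder_def amul_def fun_eq_iff)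
  ultimately show "rsol (\<lambda>e n. 0) (\<lambda>d k n. 0::'r)" unfolding rsol_def by blast
qed

lemma Rsol_sum:
  assumes "finite X" "\<forall>x\<in>X. dfin (Dx x)"
  shows "Rsol (\<lambda>e n. \<Sum>x\<in>X. a x * Dx x e n) = (\<lambda>d k n. \<Sum>x\<in>X. a x * Rsol (Dx x) d k n)"
  using assms
proof (induction X rule: finite_induct)
  case empty
  then show ?case using Rsol_zero by simp
next
  case (insert x F)
  have df: "dfin (\<lambda>e n. \<Sum>x\<in>F. a x * Dx x e n)"
    unfolding dfin_def
  proof
    fix e
    show "fin (\<lambda>n. \<Sum>x\<in>F. a x * Dx x e n)"
      by (rule fin_sum[OF insert(1)]) (use insert(4) in \<open>auto simp: dfin_def fin_lin[of _ "\<lambda>n. 0", simplified]\<close>)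
  qed
  have "Rsol (\<lambda>e n. \<Sum>x\<in>insert x F. a x * Dx x e n) = Rsol (\<lambda>e n. a x * Dx x e n + (\<Sum>x\<in>F. a x * Dx x e n))"
    using insert(1,2) by simp
  also have "\<dots> = (\<lambda>d k n. a x * Rsol (Dx x) d k n + Rsol (\<lambda>e n. \<Sum>x\<in>F. a x * Dx x e n) d k n)"
    by (rule Rsol_lin) (use insert(4) df in auto)
  also have "\<dots> = (\<lambda>d k n. \<Sum>x\<in>insert x F. a x * Rsol (Dx x) d k n)"
    using insert by simp
  finally show ?case .
qed

definition delta :: "(nat \<Rightarrow> nat) \<Rightarrow> nat \<Rightarrow> (nat \<Rightarrow> nat) \<Rightarrow> nat \<Rightarrow> 'r" where
  "delta e p = (\<lambda>e' n. if e' = e \<and> n = p then 1 else 0)"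

lemma dfin_delta: "dfin (delta e p)"
  unfolding dfin_def fin_def delta_def
  by (intro allI, rule finite_subset[of _ "{p}"]) auto

lemma sol_rsol:
  assumes "is_solution l m A g"
  shows "rsol (\<lambda>e. g e (\<lambda>_. 0)) g"
proof -
  have gs: "gspace l g" and eq: "\<forall>i\<in>{1..l}. \<forall>d\<in>mindex (Suc l). pder l m i g d = amul (A i) g d"
    using assms unfolding is_solution_def by auto
  have "releq (\<lambda>e. g e (\<lambda>_. 0)) g d" if d: "d \<in> mindex (Suc l)" for d
  proof (cases "resonant l m d")
    case True
    have "\<forall>k\<in>mindex l. k \<noteq> (\<lambda>_. 0) \<longrightarrow> pder l m (iota k) g d (dec k) = amul (A (iota k)) g d (dec k)"
      using eq d iota_props(1) by simp
    then show ?thesis using True unfolding releq_def by simp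
  next
    case False
    then show ?thesis using eq d idx_props(1)[OF False] unfolding releq_def by simp
  qed
  then show ?thesis using gs unfolding rsol_def by blast
qed

lemma representation:
  assumes d: "d \<in> mindex (Suc l)" and g: "is_solution l m A g"
  shows "g d k n = (\<Sum>e\<in>{e. e \<le> d \<and> resonant l m e}.
     mulv (\<lambda>n p. Rsol (delta e p) d k n) (g e (\<lambda>_. 0)) n)"
proof -
  let ?E = "{e. e \<le> d \<and> resonant l m e}"
  have fE: "finite ?E" using finite_le_mindex[OF d] by (rule finite_subset[rotated]) auto
  have rg: "rsol (\<lambda>e. g e (\<lambda>_. 0)) g" by (rule sol_rsol[OF g])
  have gs: "gspace l g" using rg unfolding rsol_def by blast
  have fg: "\<forall>d k. fin (g d k)" by (rule gspace_fin[OF gs])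
  define DE where "DE = (\<lambda>e n. if e \<in> ?E then g e (\<lambda>_. 0) n else 0)"
  define X where "X = Sigma ?E (\<lambda>e. {p. g e (\<lambda>_. 0) p \<noteq> 0})"
  have fX: "finite X" unfolding X_def using fE fg by (auto simp: fin_def)
  have DE_sum: "DE = (\<lambda>e n. \<Sum>x\<in>X. g (fst x) (\<lambda>_. 0) (snd x) * delta (fst x) (snd x) e n)"
  proof (intro ext)
    fix e n
    have "(\<Sum>x\<in>X. g (fst x) (\<lambda>_. 0) (snd x) * delta (fst x) (snd x) e n)
        = (\<Sum>x\<in>X. if x = (e, n) then g (fst x) (\<lambda>_. 0) (snd x) else 0)"
      by (rule sum.cong) (auto simp: delta_def)
    also have "\<dots> = (if (e, n) \<in> X then g e (\<lambda>_. 0) n else 0)"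
      using sum.delta[OF fX, of "(e, n)" "\<lambda>x. g (fst x) (\<lambda>_. 0) (snd x)"] by simp
    also have "\<dots> = DE e n" unfolding DE_def X_def by auto
    finally show "DE e n = (\<Sum>x\<in>X. g (fst x) (\<lambda>_. 0) (snd x) * delta (fst x) (snd x) e n)" by simp
  qed
  have dDE: "dfin DE" unfolding dfin_def DE_def fin_def
  proof
    fix e show "finite {n. (if e \<in> ?E then g e (\<lambda>_. 0) n else 0) \<noteq> 0}"
      using fg by (cases "e \<in> ?E") (auto simp: fin_def)
  qed
  have "g d = Rsol DE d"
  proof (rule uniq2[OF rg Rsol_rsol[OF dDE] d])
    show "\<forall>e. e \<le> d \<longrightarrow> resonant l m e \<longrightarrow> g e (\<lambda>_. 0) = DE e" unfolding DE_def by auto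
  qed
  then have "g d k n = Rsol DE d k n" by simp
  also have "\<dots> = (\<Sum>x\<in>X. g (fst x) (\<lambda>_. 0) (snd x) * Rsol (delta (fst x) (snd x)) d k n)"
    unfolding DE_sum
    using Rsol_sum[OF fX, of "\<lambda>x. delta (fst x) (snd x)" "\<lambda>x. g (fst x) (\<lambda>_. 0) (snd x)"] dfin_delta
    by simp
  also have "\<dots> = (\<Sum>e\<in>?E. \<Sum>p\<in>{p. g e (\<lambda>_. 0) p \<noteq> 0}. g e (\<lambda>_. 0) p * Rsol (delta e p) d k n)"
    unfolding X_def using fE fg by (subst sum.Sigma) (auto simp: fin_def case_prod_beta)
  also have "\<dots> = (\<Sum>e\<in>?E. mulv (\<lambda>n p. Rsol (delta e p) d k n) (g e (\<lambda>_. 0)) n)"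
    unfolding mulv_def by (simp add: mult.commute)
  finally show ?thesis .
qed

end


theorem proposition6p1:
  fixes l :: nat and m :: "nat \<Rightarrow> nat"
    and A :: "nat \<Rightarrow> nat \<Rightarrow> nat \<Rightarrow> (nat \<Rightarrow> nat) \<Rightarrow> 'r::{real_algebra_1, comm_ring_1}"
  assumes l: "l \<ge> 1"
    and m_pos: "\<forall>i\<in>{1..l}. m i > 0"
    and A_mat: "\<forall>i\<in>{1..l}. emat l (A i)"
    and comm: "\<forall>i\<in>{1..l}. \<forall>j\<in>{1..l}. emul (A i) (A j) = emul (A j) (A i)"
    and compat: "\<forall>i\<in>{1..l}. \<forall>j\<in>{1..l}.
        (\<lambda>n p. epder l m i (A j n p)) = (\<lambda>n p. epder l m j (A i n p))"
    and split: "\<forall>i\<in>{1..l}. \<exists>A' A''. emat l A' \<and> emat l A'' \<and>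
        A i = (\<lambda>n p d. A' n p d + A'' n p d) \<and>
        (\<forall>n p. n \<le> p \<longrightarrow> A' n p = (\<lambda>d. 0)) \<and>
        (\<forall>n p d. A' n p d \<noteq> 0 \<longrightarrow> d i \<noteq> m i * d (Suc l)) \<and>
        (\<forall>n p. p \<le> n \<longrightarrow> A'' n p = (\<lambda>d. 0)) \<and>
        (\<forall>n p d. A'' n p d \<noteq> 0 \<longrightarrow> d = (\<lambda>i. 0))"
  shows "(\<forall>g h. is_solution l m A g \<and> is_solution l m A h \<and>
            (\<forall>d\<in>mindex (Suc l). resonant l m d \<longrightarrow> g d (\<lambda>i. 0) = h d (\<lambda>i. 0)) \<longrightarrow> g = h)
       \<and> (\<forall>d\<in>mindex (Suc l). \<forall>k\<in>mindex l.
            \<exists>S C C0. finite S \<and> (\<forall>s\<in>S. fst s < d) \<and> rmat C0 \<and> (\<forall>s\<in>S. rmat (C s)) \<and>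
              (\<forall>g. is_solution l m A g \<longrightarrow>
                 (\<forall>n. g d k n = (if resonant l m d then mulv C0 (g d (\<lambda>i. 0)) n else 0)
                        + (\<Sum>s\<in>S. mulv (C s) (g (fst s) (snd s)) n))))"
proof -
  have upper: "\<forall>i\<in>{1..l}. \<forall>n p. A i n p (\<lambda>_. 0) \<noteq> 0 \<longrightarrow> n < p"
  proof (intro ballI allI impI)
    fix i n p assume i: "i \<in> {1..l}" and nz: "A i n p (\<lambda>_. 0) \<noteq> 0"
    have "\<exists>A' A''. emat l A' \<and> emat l A'' \<and>
        A i = (\<lambda>n p d. A' n p d + A'' n p d) \<and>
        (\<forall>n p. n \<le> p \<longrightarrow> A' n p = (\<lambda>d. 0)) \<and>
        (\<forall>n p d. A' n p d \<noteq> 0 \<longrightarrow> d i \<noteq> m i * d (Suc l)) \<and>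
        (\<forall>n p. p \<le> n \<longrightarrow> A'' n p = (\<lambda>d. 0)) \<and>
        (\<forall>n p d. A'' n p d \<noteq> 0 \<longrightarrow> d = (\<lambda>i. 0))" using split i by (rule bspec)
    then obtain A' A'' where AA0: "emat l A' \<and> emat l A'' \<and>
        A i = (\<lambda>n p d. A' n p d + A'' n p d) \<and>
        (\<forall>n p. n \<le> p \<longrightarrow> A' n p = (\<lambda>d. 0)) \<and>
        (\<forall>n p d. A' n p d \<noteq> 0 \<longrightarrow> d i \<noteq> m i * d (Suc l)) \<and>
        (\<forall>n p. p \<le> n \<longrightarrow> A'' n p = (\<lambda>d. 0)) \<and>
        (\<forall>n p d. A'' n p d \<noteq> 0 \<longrightarrow> d = (\<lambda>i. 0))" by (elim exE)
    note c2 = conjunct2[OF conjunct2[OF AA0]]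
    note c4 = conjunct2[OF conjunct2[OF c2]]
    note AA = conjunct1[OF c2] conjunct1[OF c4] conjunct1[OF conjunct2[OF c4]]
    have "A' n p (\<lambda>_. 0) \<noteq> 0 \<longrightarrow> (\<lambda>_. 0::nat) i \<noteq> m i * (\<lambda>_. 0::nat) (Suc l)"
      using AA(2) by blast
    then have "A' n p (\<lambda>_. 0) = 0" by simp
    then have "A'' n p (\<lambda>_. 0) \<noteq> 0" using nz AA(1) by simp
    have "\<not> p \<le> n"
    proof
      assume "p \<le> n"
      then have "A'' n p = (\<lambda>d. 0)" using AA(3) by blast
      then show False using \<open>A'' n p (\<lambda>_. 0) \<noteq> 0\<close> by simp
    qed
    then show "n < p" by simp
  qed
  interpret P: P6 l m A using A_mat upper by unfold_locales
  show ?thesis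
  proof (intro conjI allI impI ballI)
    fix g h
    assume a: "is_solution l m A g \<and> is_solution l m A h \<and>
            (\<forall>d\<in>mindex (Suc l). resonant l m d \<longrightarrow> g d (\<lambda>i. 0) = h d (\<lambda>i. 0))"
    have rg: "P.rsol (\<lambda>e. g e (\<lambda>_. 0)) g" "P.rsol (\<lambda>e. h e (\<lambda>_. 0)) h"
      using P.sol_rsol a by auto
    show "g = h"
    proof
      fix d
      show "g d = h d"
      proof (cases "d \<in> mindex (Suc l)")
        case True
        show ?thesis
        proof (rule P.uniq2[OF rg True], intro allI impI)
          fix e assume "e \<le> d" "resonant l m e"
          then show "g e (\<lambda>_. 0) = h e (\<lambda>_. 0)" using a le_mindex[OF _ True] by blast
        qed
      next
        case False then show ?thesis using rg unfolding P.rsol_def P.gspace_gok by simp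
      qed
    qed
  next
    fix d k assume d: "d \<in> mindex (Suc l)" and k: "k \<in> mindex l"
    let ?E = "{e. e \<le> d \<and> resonant l m e}"
    define Cm where "Cm = (\<lambda>e n p. P.Rsol (P.delta e p) d k n)"
    define S where "S = (\<lambda>e. (e, (\<lambda>_::nat. 0::nat))) ` (?E - {d})"
    define C :: "(nat \<Rightarrow> nat) \<times> (nat \<Rightarrow> nat) \<Rightarrow> nat \<Rightarrow> nat \<Rightarrow> 'r" where "C = (\<lambda>s. Cm (fst s))"
    have fE: "finite ?E" using finite_le_mindex[OF d] by (rule finite_subset[rotated]) auto
    have rm: "rmat (Cm e)" for e
    proof -
      have "gspace l (P.Rsol (P.delta e p))" for p
        using P.Rsol_rsol[OF P.dfin_delta] unfolding P.rsol_def by blast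
      then show ?thesis unfolding rmat_def Cm_def using P.gspace_fin by (auto simp: fin_def)
    qed
    have inj: "inj_on (\<lambda>e. (e, (\<lambda>_::nat. 0::nat))) (?E - {d})" by (rule inj_onI) simp
    have "finite S" unfolding S_def using fE by simp
    moreover have "\<forall>s\<in>S. fst s < d"
    proof
      fix s assume "s \<in> S"
      then obtain e where e: "s = (e, (\<lambda>_::nat. 0::nat))" "e \<le> d" "e \<noteq> d" unfolding S_def by blast
      then have "e < d" by (simp add: order.strict_iff_order)
      then show "fst s < d" using e(1) by simp
    qed
    moreover have "rmat (Cm d)" by (rule rm)
    moreover have "\<forall>s\<in>S. rmat (C s)" unfolding C_def using rm by blast
    moreover have "\<forall>g. is_solution l m A g \<longrightarrow>
                 (\<forall>n. g d k n = (if resonant l m d then mulv (Cm d) (g d (\<lambda>i. 0)) n else 0)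
                        + (\<Sum>s\<in>S. mulv (C s) (g (fst s) (snd s)) n))"
    proof (intro allI impI)
      fix g n assume g: "is_solution l m A g"
      have SS: "(\<Sum>s\<in>S. mulv (C s) (g (fst s) (snd s)) n) = (\<Sum>e\<in>?E - {d}. mulv (Cm e) (g e (\<lambda>_. 0)) n)"
        unfolding S_def C_def by (subst sum.reindex[OF inj]) simp
      have rep: "g d k n = (\<Sum>e\<in>?E. mulv (Cm e) (g e (\<lambda>_. 0)) n)"
        using P.representation[OF d g] unfolding Cm_def by simp
      show "g d k n = (if resonant l m d then mulv (Cm d) (g d (\<lambda>i. 0)) n else 0)
                        + (\<Sum>s\<in>S. mulv (C s) (g (fst s) (snd s)) n)"
      proof (cases "resonant l m d")
        case True
        then have "d \<in> ?E" by simp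
        then show ?thesis unfolding SS rep if_P[OF True] by (rule sum.remove[OF fE])
      next
        case False
        then have "?E - {d} = ?E" by auto
        then show ?thesis unfolding SS rep using False by simp
      qed
    qed
    ultimately show "\<exists>S C C0. finite S \<and> (\<forall>s\<in>S. fst s < d) \<and> rmat C0 \<and> (\<forall>s\<in>S. rmat (C s)) \<and>
              (\<forall>g. is_solution l m A g \<longrightarrow>
                 (\<forall>n. g d k n = (if resonant l m d then mulv C0 (g d (\<lambda>i. 0)) n else 0)
                        + (\<Sum>s\<in>S. mulv (C s) (g (fst s) (snd s)) n)))"
      by blast
  qed
qed


end
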